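(* Let $\mathcal{M}$ be a $*$-algebra with a state $\rho$, and let $A_1,\ldots,A_k\in\mathcal{M}$ be self-adjoint elements with $\rho(A_a)=0$ for all $a$. Suppose that $\rho(A_aA_b)=\rho(A_bA_a)$ for all $a,b$. Let $p\in\mathbb{C}\langle A_1,\ldots,A_k\rangle$ be a non-commutative polynomial and let $\hat p\in\mathbb{C}[A_1,\ldots,A_k]$ be its commutative image. Then for every integer $n\ge 0$, $$\lim_{N\to\infty}\gamma_n\bigl(p(\tilde A_1,\ldots,\tilde A_k)\bigr)=\gamma_n\bigl(\hat p(X_1,\ldots,X_k)\bigr),$$ where the left-hand moment is computed in $(\mathcal{M}^{\otimes N},\rho^{\otimes N})$, and $X_1,\ldots,X_k$ are classical centered jointly Gaussian real random variables with covariance $E[X_aX_b]=\rho(A_aA_b)$, the right-hand moment being $E[\hat p(X_1,\ldots,X_k)^n]$.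
   Context: A $*$-algebra is a unital complex algebra with an anti-linear anti-involution $*$. A state $\rho$ on a $*$-algebra is a $*$-invariant linear functional with $\rho(I)=1$ and $\rho(A^2)\ge0$ for every self-adjoint $A$. For $A\in\mathcal{M}$ and $1\le t\le N$, let $A^{(t)}=I^{\otimes(t-1)}\otimes A\otimes I^{\otimes(N-t)}\in\mathcal{M}^{\otimes N}$, and set $\tilde A=\frac1{\sqrt N}\sum_{t=1}^N A^{(t)}$. The product state $\rho^{\otimes N}$ on $\mathcal{M}^{\otimes N}$ is defined by $\rho^{\otimes N}(B_1\otimes\cdots\otimes B_N)=\prod_t\rho(B_t)$. For an element $B$ of a $*$-algebra with state $\omega$, the $n$th moment is $\gamma_n(B)=\omega(B^n)$ (defined whether or not $B$ is self-adjoint). The commutative image $\hat p$ of a non-commutative polynomial is obtained by letting the variables commute. *)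

theory Defs
  imports "HOL-Probability.Probability" "HOL-Library.Poly_Mapping" "HOL-Library.Multiset"
begin

text \<open>A unital complex *-algebra: the ring structure comes from the type class ring_1,
  the complex scalar multiplication is sm, the involution is st.\<close>

locale star_algebra =
  fixes sm :: "complex \<Rightarrow> 'a::ring_1 \<Rightarrow> 'a"
    and st :: "'a \<Rightarrow> 'a"
  assumes sm_add_right: "sm c (x + y) = sm c x + sm c y"
    and sm_add_left: "sm (c + d) x = sm c x + sm d x"
    and sm_sm: "sm c (sm d x) = sm (c * d) x"
    and sm_one: "sm 1 x = x"
    and sm_mult_left: "sm c (x * y) = sm c x * y"
    and sm_mult_right: "sm c (x * y) = x * sm c y"
    and st_add: "st (x + y) = st x + st y"
    and st_sm: "st (sm c x) = sm (cnj c) (st x)"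
    and st_mult: "st (x * y) = st y * st x"
    and st_st: "st (st x) = x"

definition is_state :: "(complex \<Rightarrow> 'a::ring_1 \<Rightarrow> 'a) \<Rightarrow> ('a \<Rightarrow> 'a) \<Rightarrow> ('a \<Rightarrow> complex) \<Rightarrow> bool" where
  "is_state sm st \<rho> \<longleftrightarrow>
     (\<forall>x y. \<rho> (x + y) = \<rho> x + \<rho> y) \<and>
     (\<forall>c x. \<rho> (sm c x) = c * \<rho> x) \<and>
     (\<forall>x. \<rho> (st x) = cnj (\<rho> x)) \<and>
     \<rho> 1 = 1 \<and>
     (\<forall>A. st A = A \<longrightarrow> Im (\<rho> (A * A)) = 0 \<and> Re (\<rho> (A * A)) \<ge> 0)"

text \<open>An element of the tensor power is represented by a finitely supported function
  from N-tuples (lists of length N) of elements of M to complex coefficients, i.e. the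
  formal linear combination of the elementary tensors B_1 \<otimes> ... \<otimes> B_N.
  The product state is defined on elementary tensors by the product formula and
  extended linearly.  (This is the free vector space on M^N, which maps onto the
  algebraic tensor product as an algebra; the product state factors through it.)\<close>

type_synonym 'a tensor = "'a list \<Rightarrow> complex"

definition tbasis :: "'a list \<Rightarrow> 'a tensor" where
  "tbasis e = (\<lambda>e'. if e' = e then 1 else 0)"

definition tunit :: "nat \<Rightarrow> ('a::ring_1) tensor" where
  "tunit N = tbasis (replicate N 1)"

definition tscale :: "complex \<Rightarrow> 'a tensor \<Rightarrow> 'a tensor" where
  "tscale c x = (\<lambda>e. c * x e)"

definition tmul :: "('a::ring_1) tensor \<Rightarrow> 'a tensor \<Rightarrow> 'a tensor" where
  "tmul x y = (\<lambda>e. \<Sum>(e1, e2) \<in> {(e1, e2). x e1 \<noteq> 0 \<and> y e2 \<noteq> 0 \<and> map2 (*) e1 e2 = e}.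
                     x e1 * y e2)"

definition tpow :: "nat \<Rightarrow> ('a::ring_1) tensor \<Rightarrow> nat \<Rightarrow> 'a tensor" where
  "tpow N x n = (tmul x ^^ n) (tunit N)"

definition tprod_list :: "nat \<Rightarrow> ('a::ring_1) tensor list \<Rightarrow> 'a tensor" where
  "tprod_list N xs = foldr tmul xs (tunit N)"

text \<open>A^{(t)} (here with 0-based position t < N).\<close>
definition tembed :: "nat \<Rightarrow> nat \<Rightarrow> 'a::ring_1 \<Rightarrow> 'a tensor" where
  "tembed N t A = tbasis ((replicate N 1)[t := A])"

definition ttilde :: "nat \<Rightarrow> 'a::ring_1 \<Rightarrow> 'a tensor" where
  "ttilde N A = tscale (complex_of_real (1 / sqrt (real N))) (\<lambda>e. \<Sum>t<N. tembed N t A e)"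

definition tstate :: "('a \<Rightarrow> complex) \<Rightarrow> 'a tensor \<Rightarrow> complex" where
  "tstate \<rho> x = (\<Sum>e \<in> {e. x e \<noteq> 0}. x e * prod_list (map \<rho> e))"

text \<open>A non-commutative polynomial in variables indexed by nat: a finitely supported map
  from words (lists of variable indices) to complex coefficients.\<close>

type_synonym ncpoly = "nat list \<Rightarrow>\<^sub>0 complex"

definition teval :: "nat \<Rightarrow> ncpoly \<Rightarrow> (nat \<Rightarrow> ('a::ring_1) tensor) \<Rightarrow> 'a tensor" where
  "teval N p B = (\<lambda>e. \<Sum>w \<in> Poly_Mapping.keys p. Poly_Mapping.lookup p w * tprod_list N (map B w) e)"

text \<open>Commutative image: monomials are multisets of variables.\<close>
definition comm_image :: "ncpoly \<Rightarrow> nat multiset \<Rightarrow> complex" where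
  "comm_image p m = (\<Sum>w \<in> {w \<in> Poly_Mapping.keys p. mset w = m}. Poly_Mapping.lookup p w)"

definition ceval :: "(nat multiset \<Rightarrow> complex) \<Rightarrow> (nat \<Rightarrow> complex) \<Rightarrow> complex" where
  "ceval q X = (\<Sum>m \<in> {m. q m \<noteq> 0}. q m * (\<Prod>a \<in># m. X a))"

text \<open>A real random variable is centered Gaussian if it is a.s. 0 (degenerate variance)
  or has the normal law N(0, sigma^2) with sigma > 0.\<close>
definition centered_gaussian :: "'b measure \<Rightarrow> ('b \<Rightarrow> real) \<Rightarrow> bool" where
  "centered_gaussian M Y \<longleftrightarrow>
     Y \<in> borel_measurable M \<and>
     ((AE x in M. Y x = 0) \<or> (\<exists>\<sigma>>0. distributed M lborel Y (normal_density 0 \<sigma>)))"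

definition jointly_centered_gaussian :: "'b measure \<Rightarrow> nat \<Rightarrow> (nat \<Rightarrow> 'b \<Rightarrow> real) \<Rightarrow> bool" where
  "jointly_centered_gaussian M k X \<longleftrightarrow>
     (\<forall>t :: nat \<Rightarrow> real. centered_gaussian M (\<lambda>x. \<Sum>a<k. t a * X a x))"

end

theory Submission
  imports Defs
begin

primrec Vf :: "nat \<Rightarrow> 'a::ring_1 list \<Rightarrow> (nat \<Rightarrow> 'a) \<Rightarrow> ((nat \<Rightarrow> 'a) \<Rightarrow> complex) \<Rightarrow> complex" where
  "Vf N [] z K = K z"
| "Vf N (b # bs) z K = (\<Sum>t<N. Vf N bs (z(t := z t * b)) K)"

definition V :: "('a::ring_1 \<Rightarrow> complex) \<Rightarrow> nat \<Rightarrow> 'a list \<Rightarrow> (nat \<Rightarrow> 'a) \<Rightarrow> complex" where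
  "V \<rho> N bs z = Vf N bs z (\<lambda>z'. \<Prod>t<N. \<rho> (z' t))"

lemma Vf_append: "Vf N (bs1 @ bs2) z K = Vf N bs1 z (\<lambda>z'. Vf N bs2 z' K)"
  by (induction bs1 arbitrary: z) auto

lemma Vf_lin: "finite I \<Longrightarrow> Vf N bs z (\<lambda>z'. \<Sum>i\<in>I. c i * K i z') = (\<Sum>i\<in>I. c i * Vf N bs z (K i))"
proof (induction bs arbitrary: z)
  case Nil then show ?case by simp
next
  case (Cons b bs)
  have "Vf N (b # bs) z (\<lambda>z'. \<Sum>i\<in>I. c i * K i z') = (\<Sum>t<N. \<Sum>i\<in>I. c i * Vf N bs (z(t := z t * b)) (K i))"
    using Cons by simp
  also have "\<dots> = (\<Sum>i\<in>I. c i * Vf N (b # bs) z (K i))"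
    by (subst sum.swap) (simp add: sum_distrib_left)
  finally show ?case .
qed

locale addst =
  fixes \<rho> :: "'a::ring_1 \<Rightarrow> complex"
  assumes add: "\<rho> (x + y) = \<rho> x + \<rho> y"
    and one: "\<rho> 1 = 1"
begin

lemma zero[simp]: "\<rho> 0 = 0"
  using add[of 0 0] by simp

lemma minus: "\<rho> (- x) = - \<rho> x"
  using add[of x "-x"] by (metis add.commute eq_neg_iff_add_eq_0 add.right_inverse zero)

lemma diff: "\<rho> (x - y) = \<rho> x - \<rho> y"
  using add[of x "-y"] minus[of y] by simp

lemma sum: "\<rho> (sum f S) = (\<Sum>i\<in>S. \<rho> (f i))"
  by (induction S rule: infinite_finite_induct) (auto simp: add)

lemma V_slot_add:
  assumes "t < N"
  shows "V \<rho> N bs (z(t := x + y)) = V \<rho> N bs (z(t := x)) + V \<rho> N bs (z(t := y))"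
  using assms
proof (induction bs arbitrary: z x y)
  case Nil
  have r: "\<And>w. (\<Prod>t'<N. \<rho> ((z(t := w)) t')) = \<rho> w * (\<Prod>t'\<in>{..<N}-{t}. \<rho> (z t'))"
  proof -
    fix w
    have "(\<Prod>t'<N. \<rho> ((z(t := w)) t')) = \<rho> ((z(t := w)) t) * (\<Prod>t'\<in>{..<N}-{t}. \<rho> ((z(t := w)) t'))"
      using Nil by (subst prod.remove[of _ t]) auto
    also have "(\<Prod>t'\<in>{..<N}-{t}. \<rho> ((z(t := w)) t')) = (\<Prod>t'\<in>{..<N}-{t}. \<rho> (z t'))"
      by (rule prod.cong) auto
    finally show "?thesis w" by simp
  qed
  show ?case unfolding V_def Vf.simps r by (simp add: add distrib_right)
next
  case (Cons b bs)
  have e: "V \<rho> N (b # bs) z' = (\<Sum>t'<N. V \<rho> N bs (z'(t' := z' t' * b)))" for z'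
    by (simp add: V_def)
  have "V \<rho> N bs ((z(t := x + y))(t' := (z(t := x + y)) t' * b)) =
        V \<rho> N bs ((z(t := x))(t' := (z(t := x)) t' * b)) + V \<rho> N bs ((z(t := y))(t' := (z(t := y)) t' * b))"
    if "t' < N" for t'
  proof (cases "t' = t")
    case True
    then show ?thesis using Cons.IH[of z "x * b" "y * b"] Cons.prems by (simp only: fun_upd_upd fun_upd_same distrib_right)
  next
    case False
    have e1: "\<And>w. (z(t := w)) t' = z t'" using False by simp
    have e2: "\<And>w. (z(t := w))(t' := z t' * b) = (z(t' := z t' * b))(t := w)"
      using False by (simp add: fun_upd_twist)
    show ?thesis unfolding e1 e2 by (rule Cons.IH[OF Cons.prems])

  qed
  then show ?case unfolding e by (simp add: sum.distrib)
qed

lemma V_slot_zero: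
  assumes "t < N"
  shows "V \<rho> N bs (z(t := 0)) = 0"
  using V_slot_add[OF assms, where bs=bs and z=z and x=0 and y=0] by simp

lemma V_slot_diff:
  assumes "t < N"
  shows "V \<rho> N bs (z(t := x - y)) = V \<rho> N bs (z(t := x)) - V \<rho> N bs (z(t := y))"
  using V_slot_add[OF assms, where bs=bs and z=z and x="x - y" and y=y] by simp

lemma V_Cons: "V \<rho> N (b # bs) z = (\<Sum>t<N. V \<rho> N bs (z(t := z t * b)))"
  by (simp add: V_def)

lemma V_letter_add:
  "V \<rho> N (v @ (x + y) # w) z = V \<rho> N (v @ x # w) z + V \<rho> N (v @ y # w) z"
proof (induction v arbitrary: z)
  case Nil
  have "V \<rho> N bs (z(t := z t * (x + y))) = V \<rho> N bs (z(t := z t * x)) + V \<rho> N bs (z(t := z t * y))"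
    if "t < N" for t bs
    using V_slot_add[OF that] by (simp add: distrib_left)
  then show ?case by (simp add: V_Cons sum.distrib)
next
  case (Cons c v)
  show ?case unfolding append_Cons V_Cons Cons.IH by (rule sum.distrib)
qed

lemma V_letter_zero: "V \<rho> N (v @ 0 # w) z = 0"
  using V_letter_add[where v=v and x=0 and y=0 and w=w and z=z] by simp

lemma V_letter_sum:
  assumes "finite S"
  shows "V \<rho> N (v @ sum a S # w) z = (\<Sum>i\<in>S. V \<rho> N (v @ a i # w) z)"
  using assms
  by (induction S rule: finite_induct) (auto simp: V_letter_zero V_letter_add)

lemma V_swap:
  "V \<rho> N (v @ a # b # w) z - V \<rho> N (v @ b # a # w) z = V \<rho> N (v @ (a * b - b * a) # w) z"
proof (induction v arbitrary: z)
  case Nil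
  define f where "f = (\<lambda>a b t t'. V \<rho> N w ((z(t := z t * a))(t' := (z(t := z t * a)) t' * b)))"
  have lhs: "V \<rho> N (a # b # w) z = (\<Sum>t<N. \<Sum>t'<N. f a b t t')"
    unfolding V_Cons f_def by simp
  have rhs: "V \<rho> N (b # a # w) z = (\<Sum>t<N. \<Sum>t'<N. f b a t t')"
    unfolding V_Cons f_def by simp
  have off: "f a b t t' = f b a t' t" if "t \<noteq> t'" for t t'
  proof -
    have "(z(t := z t * a))(t' := (z(t := z t * a)) t' * b) = (z(t' := z t' * b))(t := (z(t' := z t' * b)) t * a)"
      using that by (auto simp: fun_eq_iff)
    then show ?thesis unfolding f_def by simp
  qed
  have "(\<Sum>t<N. \<Sum>t'<N. f a b t t') - (\<Sum>t<N. \<Sum>t'<N. f b a t t')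
        = (\<Sum>t<N. \<Sum>t'<N. f a b t t' - f b a t' t)"
    by (subst (2) sum.swap) (simp only: sum_subtractf)
  also have "\<dots> = (\<Sum>t<N. \<Sum>t'<N. (if t = t' then f a b t t - f b a t t else 0))"
  proof (intro sum.cong refl)
    fix t t' show "f a b t t' - f b a t' t = (if t = t' then f a b t t - f b a t t else 0)"
      using off[of t t'] by (cases "t = t'") auto
  qed
  also have "\<dots> = (\<Sum>t<N. f a b t t - f b a t t)"
    by (simp add: sum.delta)
  also have "\<dots> = (\<Sum>t<N. V \<rho> N w (z(t := z t * (a * b - b * a))))"
  proof (intro sum.cong refl)
    fix t assume t: "t \<in> {..<N}"
    have "f a b t t = V \<rho> N w (z(t := z t * a * b))" "f b a t t = V \<rho> N w (z(t := z t * b * a))"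
      by (simp_all add: f_def)
    moreover have "z t * (a * b - b * a) = z t * a * b - z t * b * a"
      by (simp add: algebra_simps)
    ultimately show "f a b t t - f b a t t = V \<rho> N w (z(t := z t * (a * b - b * a)))"
      using V_slot_diff[of t N w z "z t * a * b" "z t * b * a"] t by simp
  qed
  also have "\<dots> = V \<rho> N ((a * b - b * a) # w) z"
    by (simp only: V_Cons)
  finally show ?case using lhs rhs by simp
next
  case (Cons c v)
  show ?case unfolding append_Cons V_Cons sum_subtractf[symmetric] Cons.IH ..
qed

end

definition sw :: "nat \<Rightarrow> nat \<Rightarrow> nat \<Rightarrow> nat" where
  "sw i j x = (if x = i then j else if x = j then i else x)"

lemma sw_sw[simp]: "sw i j (sw i j x) = x"
  by (auto simp: sw_def)

lemma bij_sw: "bij (sw i j)"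
  by (metis bij_betw_def inj_def sw_sw surj_def)

lemma sw_image: "i < N \<Longrightarrow> j < N \<Longrightarrow> sw i j ` {..<N} = {..<N}"
  by (auto simp: sw_def image_def)

lemma sum_split_add: "(\<Sum>t<(n::nat) + r. f t) = (\<Sum>t<n. f t) + (\<Sum>i<r. f (n + i))"
  by (induction r) (auto simp: add.assoc)

lemma prod_split_add: "(\<Prod>t<(n::nat) + r. f t) = (\<Prod>t<n. f t) * (\<Prod>i<r. f (n + i))"
  by (induction r) (auto simp: mult.assoc)

context addst
begin

lemma V_perm:
  assumes "bij \<sigma>" "\<sigma> ` {..<N} = {..<N}"
  shows "V \<rho> N bs (z \<circ> \<sigma>) = V \<rho> N bs z"
proof (induction bs arbitrary: z)
  case Nil
  have inj: "inj_on \<sigma> {..<N}" using assms(1) bij_is_inj inj_on_subset by blast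
  have "(\<Prod>t<N. \<rho> ((z \<circ> \<sigma>) t)) = (\<Prod>t\<in>\<sigma> ` {..<N}. \<rho> (z t))"
    using prod.reindex[OF inj, of "\<lambda>t. \<rho> (z t)"] by (simp add: comp_def)
  then show ?case by (simp add: V_def assms(2))
next
  case (Cons b bs)
  have inj: "inj_on \<sigma> {..<N}" using assms(1) bij_is_inj inj_on_subset by blast
  have e: "(z \<circ> \<sigma>)(t := (z \<circ> \<sigma>) t * b) = (z(\<sigma> t := z (\<sigma> t) * b)) \<circ> \<sigma>" for t
    using assms(1) by (auto simp: fun_eq_iff bij_def inj_def)
  have "V \<rho> N (b # bs) (z \<circ> \<sigma>) = (\<Sum>t<N. V \<rho> N bs ((z \<circ> \<sigma>)(t := (z \<circ> \<sigma>) t * b)))"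
    by (rule V_Cons)
  also have "\<dots> = (\<Sum>t<N. V \<rho> N bs ((z(\<sigma> t := z (\<sigma> t) * b)) \<circ> \<sigma>))"
    by (simp only: e)
  also have "\<dots> = (\<Sum>t<N. V \<rho> N bs (z(\<sigma> t := z (\<sigma> t) * b)))"
    by (simp only: Cons.IH)
  also have "\<dots> = (\<Sum>t\<in>\<sigma> ` {..<N}. V \<rho> N bs (z(t := z t * b)))"
    using sum.reindex[OF inj, of "\<lambda>t. V \<rho> N bs (z(t := z t * b))"] by (simp add: comp_def)
  also have "\<dots> = V \<rho> N (b # bs) z"
    by (simp only: assms(2) V_Cons)
  finally show ?case .
qed

end

definition zf :: "('a::ring_1 \<times> bool) list \<Rightarrow> nat \<Rightarrow> 'a" where
  "zf zs t = (if t < length zs then fst (zs ! t) else 1)"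

definition upd :: "('a::ring_1 \<times> bool) list \<Rightarrow> nat \<Rightarrow> 'a \<Rightarrow> ('a \<times> bool) list" where
  "upd zs j b = zs[j := (fst (zs ! j) * b, False)]"

definition G :: "('a::ring_1 \<Rightarrow> complex) \<Rightarrow> 'a list \<Rightarrow> ('a \<times> bool) list \<Rightarrow> nat \<Rightarrow> complex" where
  "G \<rho> bs zs r = V \<rho> (length zs + r) bs (zf zs)"

context addst
begin

lemma G_Cons:
  "G \<rho> (b # bs) zs r = (\<Sum>j<length zs. G \<rho> bs (upd zs j b) r) + of_nat r * G \<rho> bs (zs @ [(b, True)]) (r - 1)"
proof -
  define n where "n = length zs"
  have "G \<rho> (b # bs) zs r = (\<Sum>t<n + r. V \<rho> (n + r) bs ((zf zs)(t := zf zs t * b)))"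
    by (simp add: G_def V_Cons n_def)
  also have "\<dots> = (\<Sum>t<n. V \<rho> (n + r) bs ((zf zs)(t := zf zs t * b)))
      + (\<Sum>i<r. V \<rho> (n + r) bs ((zf zs)(n + i := zf zs (n + i) * b)))"
    by (rule sum_split_add)
  also have "(\<Sum>t<n. V \<rho> (n + r) bs ((zf zs)(t := zf zs t * b))) = (\<Sum>j<length zs. G \<rho> bs (upd zs j b) r)"
  proof (intro sum.cong)
    fix t assume "t \<in> {..<length zs}"
    then have "(zf zs)(t := zf zs t * b) = zf (upd zs t b)"
      by (auto simp: fun_eq_iff zf_def upd_def n_def nth_list_update)
    then show "V \<rho> (n + r) bs ((zf zs)(t := zf zs t * b)) = G \<rho> bs (upd zs t b) r"
      by (simp add: G_def upd_def n_def)
  qed (simp add: n_def)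
  also have "(\<Sum>i<r. V \<rho> (n + r) bs ((zf zs)(n + i := zf zs (n + i) * b))) = of_nat r * G \<rho> bs (zs @ [(b, True)]) (r - 1)"
  proof -
    have "V \<rho> (n + r) bs ((zf zs)(n + i := zf zs (n + i) * b)) = G \<rho> bs (zs @ [(b, True)]) (r - 1)" if "i < r" for i
    proof -
      have "(zf zs)(n + i := zf zs (n + i) * b) = ((zf zs)(n := b)) \<circ> sw n (n + i)"
        by (auto simp: fun_eq_iff zf_def sw_def n_def)
      then have "V \<rho> (n + r) bs ((zf zs)(n + i := zf zs (n + i) * b)) = V \<rho> (n + r) bs ((zf zs)(n := b))"
        using V_perm[OF bij_sw sw_image[of n "n + r" "n + i"]] that by simp
      also have "(zf zs)(n := b) = zf (zs @ [(b, True)])"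
        by (auto simp: fun_eq_iff zf_def n_def nth_append)
      moreover have "G \<rho> bs (zs @ [(b, True)]) (r - 1) = V \<rho> (n + r) bs (zf (zs @ [(b, True)]))"
        using that by (simp add: G_def n_def)
      ultimately show ?thesis by (simp only:)
    qed
    then show ?thesis by simp
  qed
  finally show ?thesis .
qed

end

primrec Pol :: "('a::ring_1 \<Rightarrow> complex) \<Rightarrow> 'a list \<Rightarrow> ('a \<times> bool) list \<Rightarrow> complex poly" where
  "Pol \<rho> [] zs = [: \<Prod>j<length zs. \<rho> (fst (zs ! j)) :]"
| "Pol \<rho> (b # bs) zs = (\<Sum>j<length zs. Pol \<rho> bs (upd zs j b)) + pCons 0 (pcompose (Pol \<rho> bs (zs @ [(b, True)])) [:-1, 1:])"

context addst
begin

lemma G_poly: "G \<rho> bs zs r = poly (Pol \<rho> bs zs) (of_nat r)"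
proof (induction bs arbitrary: zs r)
  case Nil
  have "G \<rho> [] zs r = (\<Prod>t<length zs + r. \<rho> (zf zs t))"
    by (simp add: G_def V_def)
  also have "\<dots> = (\<Prod>t<length zs. \<rho> (zf zs t)) * (\<Prod>i<r. \<rho> (zf zs (length zs + i)))"
    by (rule prod_split_add)
  also have "\<dots> = (\<Prod>j<length zs. \<rho> (fst (zs ! j)))"
    by (simp add: zf_def one)
  finally show ?case by simp
next
  case (Cons b bs)
  have p: "poly (pCons 0 (pcompose P [:-1, 1:])) (of_nat r) = of_nat r * poly P (of_nat (r - 1))" for P :: "complex poly"
    by (cases r) (auto simp: poly_pcompose)
  show ?case
    by (cases r) (simp_all add: G_Cons Cons.IH poly_sum poly_pcompose)
qed

end


definition sc :: "('a \<times> bool) list \<Rightarrow> nat" where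
  "sc zs = length (filter snd zs)"

lemma sc_append[simp]: "sc (zs @ [(b, True)]) = Suc (sc zs)"
  by (simp add: sc_def)

lemma filter_upd_len:
  "j < length xs \<Longrightarrow> length (filter snd (xs[j := (y, False)])) = length (filter snd xs) - (if snd (xs ! j) then 1 else 0)
     \<and> (snd (xs ! j) \<longrightarrow> length (filter snd xs) \<ge> 1)"
proof (induction xs arbitrary: j)
  case Nil then show ?case by simp
next
  case (Cons x xs)
  show ?case
  proof (cases j)
    case 0 then show ?thesis by auto
  next
    case (Suc i)
    then show ?thesis using Cons.IH[of i] Cons.prems by auto
  qed
qed

lemma sc_upd: "j < length zs \<Longrightarrow> sc (upd zs j b) = sc zs - (if snd (zs ! j) then 1 else 0)"
  using filter_upd_len[of j zs] by (simp add: sc_def upd_def)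

lemma sc_upd_pos: "j < length zs \<Longrightarrow> snd (zs ! j) \<Longrightarrow> sc zs \<ge> 1"
  using filter_upd_len[of j zs] by (simp add: sc_def)

lemma sc_conv: "sc zs = card {j. j < length zs \<and> snd (zs ! j)}"
  by (simp add: sc_def length_filter_conv_card)

definition slot_inv :: "('a::ring_1 \<Rightarrow> complex) \<Rightarrow> ('a \<times> bool) list \<Rightarrow> bool" where
  "slot_inv \<rho> zs \<longleftrightarrow> (\<forall>p\<in>set zs. snd p \<longrightarrow> \<rho> (fst p) = 0)"

lemma inv_upd: "slot_inv \<rho> zs \<Longrightarrow> slot_inv \<rho> (upd zs j b)"
  unfolding slot_inv_def upd_def by (auto dest: set_update_subset_insert[THEN subsetD])

lemma inv_app: "slot_inv \<rho> zs \<Longrightarrow> \<rho> b = 0 \<Longrightarrow> slot_inv \<rho> (zs @ [(b, True)])"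
  unfolding slot_inv_def by auto

lemma degree_sum_le': "(\<And>i. i \<in> S \<Longrightarrow> degree (f i) \<le> D) \<Longrightarrow> degree (sum f S) \<le> D"
proof (induction S rule: infinite_finite_induct)
  case (insert x F)
  then show ?case by (simp add: degree_add_le)
qed auto

lemma degree_pcomp1: "degree (pcompose (p::complex poly) [:a, 1:]) = degree p"
  by (simp add: degree_pcompose)

lemma coeff_pcomp1:
  fixes p :: "complex poly"
  assumes "degree p \<le> d"
  shows "coeff (pcompose p [:a, 1:]) d = coeff p d"
proof (cases "degree p < d")
  case True
  then show ?thesis by (simp add: coeff_eq_0 degree_pcomp1)
next
  case False
  then have d: "degree p = d" using assms by simp
  have "lead_coeff (pcompose p [:a, 1:]) = lead_coeff p * lead_coeff [:a, 1:] ^ degree p"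
    by (rule lead_coeff_comp) simp
  then show ?thesis using d by (simp add: degree_pcomp1)
qed

context addst
begin

lemma Pol_zero_degree:
  assumes "slot_inv \<rho> zs" "\<forall>b\<in>set bs. \<rho> b = 0"
  shows "(length bs < sc zs \<longrightarrow> Pol \<rho> bs zs = 0) \<and> degree (Pol \<rho> bs zs) \<le> (length bs - sc zs) div 2"
  using assms
proof (induction bs arbitrary: zs)
  case Nil
  have "Pol \<rho> [] zs = 0" if "0 < sc zs"
  proof -
    obtain j where j: "j < length zs" "snd (zs ! j)"
      using \<open>0 < sc zs\<close> unfolding sc_def by (metis filter_False length_greater_0_conv nth_mem in_set_conv_nth)
    then have "\<rho> (fst (zs ! j)) = 0" using Nil.prems(1) unfolding slot_inv_def by (meson nth_mem)
    then have "(\<Prod>j<length zs. \<rho> (fst (zs ! j))) = 0"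
      using j by (intro prod_zero) auto
    then show ?thesis by simp
  qed
  then show ?case by simp
next
  case (Cons b bs)
  define s where "s = sc zs"
  define L where "L = length bs"
  have rb: "\<rho> b = 0" and rbs: "\<forall>b\<in>set bs. \<rho> b = 0" using Cons.prems by auto
  have IHj: "(L < sc (upd zs j b) \<longrightarrow> Pol \<rho> bs (upd zs j b) = 0) \<and> degree (Pol \<rho> bs (upd zs j b)) \<le> (L - sc (upd zs j b)) div 2" for j
    using Cons.IH[OF inv_upd[OF Cons.prems(1)] rbs] by (simp add: L_def)
  have IHn: "(L < Suc s \<longrightarrow> Pol \<rho> bs (zs @ [(b, True)]) = 0) \<and> degree (Pol \<rho> bs (zs @ [(b, True)])) \<le> (L - Suc s) div 2"
    using Cons.IH[OF inv_app[OF Cons.prems(1) rb] rbs] by (simp add: L_def s_def)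
  have scj: "sc (upd zs j b) \<ge> s - 1" if "j < length zs" for j
    using sc_upd[OF that, of b] by (simp add: s_def)
  define Q where "Q = pCons 0 (pcompose (Pol \<rho> bs (zs @ [(b, True)])) [:-1, 1:])"
  have PQ: "Pol \<rho> (b # bs) zs = (\<Sum>j<length zs. Pol \<rho> bs (upd zs j b)) + Q"
    by (simp add: Q_def)
  have zero: "Pol \<rho> (b # bs) zs = 0" if "Suc L < s"
  proof -
    have "Pol \<rho> bs (upd zs j b) = 0" if "j < length zs" for j
      using IHj[of j] scj[OF that] \<open>Suc L < s\<close> by auto
    moreover have "Q = 0" using IHn \<open>Suc L < s\<close> by (simp add: Q_def)
    ultimately show ?thesis unfolding PQ by simp
  qed
  have deg1: "degree (Pol \<rho> bs (upd zs j b)) \<le> (Suc L - s) div 2" if "j < length zs" for j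
  proof -
    have "(L - sc (upd zs j b)) div 2 \<le> (Suc L - s) div 2"
      using scj[OF that] by (intro div_le_mono) linarith
    then show ?thesis using IHj[of j] by linarith
  qed
  have deg2: "degree Q \<le> (Suc L - s) div 2"
  proof (cases "L < Suc s")
    case True
    then show ?thesis using IHn by (simp add: Q_def)
  next
    case False
    have "degree Q \<le> Suc (degree (Pol \<rho> bs (zs @ [(b, True)])))"
      unfolding Q_def by (metis degree_pCons_le degree_pcomp1)
    also have "\<dots> \<le> Suc ((L - Suc s) div 2)" using IHn by simp
    also have "\<dots> = (Suc L - s) div 2" using False by presburger
    finally show ?thesis .
  qed
  have "degree (Pol \<rho> (b # bs) zs) \<le> (Suc L - s) div 2"
    unfolding PQ
    by (rule order.trans[OF degree_add_le_max]) (auto intro!: degree_sum_le' deg1 deg2)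
  then show ?case using zero by (simp add: L_def s_def)
qed

end


context addst
begin

lemma Pol_coeff_rec:
  assumes slot_inv: "slot_inv \<rho> zs" and cen: "\<forall>b\<in>set (b # bs). \<rho> b = 0"
    and le: "sc zs \<le> Suc (length bs)" and ev: "even (Suc (length bs) - sc zs)"
  shows "coeff (Pol \<rho> (b # bs) zs) ((Suc (length bs) - sc zs) div 2) =
    (\<Sum>j<length zs. if snd (zs ! j) then coeff (Pol \<rho> bs (upd zs j b)) ((Suc (length bs) - sc zs) div 2) else 0)
    + (if (Suc (length bs) - sc zs) div 2 = 0 then 0 else coeff (Pol \<rho> bs (zs @ [(b, True)])) ((Suc (length bs) - sc zs) div 2 - 1))"
proof -
  define h where "h = (Suc (length bs) - sc zs) div 2"
  define s where "s = sc zs"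
  define L where "L = length bs"
  have h2: "Suc L - s = 2 * h" using ev by (simp add: h_def s_def L_def)
  have rb: "\<rho> b = 0" and rbs: "\<forall>b\<in>set bs. \<rho> b = 0" using cen by auto
  have c1: "coeff (Pol \<rho> bs (upd zs j b)) h = (if snd (zs ! j) then coeff (Pol \<rho> bs (upd zs j b)) h else 0)"
    if "j < length zs" for j
  proof (cases "snd (zs ! j)")
    case False
    then have scj: "sc (upd zs j b) = s" using sc_upd[OF that, of b] by (simp add: s_def)
    have D: "(L < s \<longrightarrow> Pol \<rho> bs (upd zs j b) = 0) \<and> degree (Pol \<rho> bs (upd zs j b)) \<le> (L - s) div 2"
      using Pol_zero_degree[OF inv_upd[OF slot_inv, of j b] rbs] scj by (simp add: L_def)
    show ?thesis
    proof (cases "h = 0")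
      case True
      then have "L < s" using h2 le by (simp add: s_def L_def)
      then show ?thesis using D False by simp
    next
      case False
      then have "L - s = 2 * (h - 1) + 1" using h2 by linarith
      then have "(L - s) div 2 = h - 1" by linarith
      then have "(L - s) div 2 < h" using False by linarith
      then show ?thesis using D \<open>\<not> snd (zs ! j)\<close> by (simp add: coeff_eq_0)
    qed
  qed simp
  have c2: "coeff (pCons 0 (pcompose (Pol \<rho> bs (zs @ [(b, True)])) [:-1, 1:])) h
      = (if h = 0 then 0 else coeff (Pol \<rho> bs (zs @ [(b, True)])) (h - 1))"
  proof (cases h)
    case 0 then show ?thesis by simp
  next
    case (Suc h')
    have "degree (Pol \<rho> bs (zs @ [(b, True)])) \<le> (L - Suc s) div 2"
      using Pol_zero_degree[OF inv_app[OF slot_inv rb] rbs] by (simp add: L_def s_def)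
    also have "(L - Suc s) div 2 = h'" using h2 Suc by presburger
    finally have "degree (Pol \<rho> bs (zs @ [(b, True)])) \<le> h'" .
    then show ?thesis using Suc by (simp add: coeff_pcomp1)
  qed
  have "coeff (Pol \<rho> (b # bs) zs) h = (\<Sum>j<length zs. coeff (Pol \<rho> bs (upd zs j b)) h)
     + coeff (pCons 0 (pcompose (Pol \<rho> bs (zs @ [(b, True)])) [:-1, 1:])) h"
    by (simp add: coeff_sum)
  also have "(\<Sum>j<length zs. coeff (Pol \<rho> bs (upd zs j b)) h) =
      (\<Sum>j<length zs. if snd (zs ! j) then coeff (Pol \<rho> bs (upd zs j b)) h else 0)"
  proof (rule sum.cong[OF refl])
    fix j assume "j \<in> {..<length zs}"
    then show "coeff (Pol \<rho> bs (upd zs j b)) h = (if snd (zs ! j) then coeff (Pol \<rho> bs (upd zs j b)) h else 0)"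
      by (intro c1) simp
  qed
  also have "coeff (pCons 0 (pcompose (Pol \<rho> bs (zs @ [(b, True)])) [:-1, 1:])) h
      = (if h = 0 then 0 else coeff (Pol \<rho> bs (zs @ [(b, True)])) (h - 1))" by (rule c2)
  finally show ?thesis by (simp only: h_def)
qed

lemma prod_upd_one:
  assumes "i < (n::nat)" "f i = 1"
  shows "(\<Prod>j<n. (f(i := v)) j) = v * (\<Prod>j<n. f j)"
proof -
  have "(\<Prod>j<n. (f(i := v)) j) = (\<Prod>j<n. (if j = i then v else 1) * f j)"
    by (rule prod.cong) (auto simp: assms)
  also have "\<dots> = (\<Prod>j<n. (if j = i then v else 1)) * (\<Prod>j<n. f j)"
    by (rule prod.distrib)
  also have "(\<Prod>j<n. (if j = i then v else 1)) = v"
    by (subst prod.delta) (use assms in auto)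
  finally show ?thesis .
qed

definition pf :: "('a \<times> bool) list \<Rightarrow> complex" where
  "pf zs = (\<Prod>i<length zs. if snd (zs ! i) then 1 else \<rho> (fst (zs ! i)))"

lemma pf_upd:
  assumes "i < length zs" "snd (zs ! i)" "fst (zs ! i) = B"
  shows "pf (upd zs i B) = \<rho> (B * B) * pf zs"
proof -
  let ?f = "\<lambda>j. if snd (zs ! j) then 1 else \<rho> (fst (zs ! j))"
  have "(\<lambda>j. if snd (upd zs i B ! j) then 1 else \<rho> (fst (upd zs i B ! j))) = ?f(i := \<rho> (B * B))"
    using assms by (auto simp: fun_eq_iff upd_def nth_list_update)
  moreover have "length (upd zs i B) = length zs" by (simp add: upd_def)
  ultimately have "pf (upd zs i B) = (\<Prod>j<length zs. (?f(i := \<rho> (B * B))) j)"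
    unfolding pf_def by (simp only:)
  also have "\<dots> = \<rho> (B * B) * pf zs"
    using prod_upd_one[of i "length zs" ?f] assms by (simp add: pf_def)
  finally show ?thesis .
qed

lemma pf_app: "pf (zs @ [(B, True)]) = pf zs"
  by (auto simp: pf_def nth_append intro!: prod.cong)

lemma Pol_diag:
  assumes B: "\<rho> B = 0"
  shows "slot_inv \<rho> zs \<Longrightarrow> (\<forall>p\<in>set zs. snd p \<longrightarrow> fst p = B) \<Longrightarrow> sc zs \<le> j \<Longrightarrow> even (j - sc zs) \<Longrightarrow>
    coeff (Pol \<rho> (replicate j B) zs) ((j - sc zs) div 2) =
      of_nat (fact j) / (2 ^ ((j - sc zs) div 2) * of_nat (fact ((j - sc zs) div 2)))
        * \<rho> (B * B) ^ ((j - sc zs) div 2 + sc zs) * pf zs"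
proof (induction j arbitrary: zs)
  case 0
  then have "sc zs = 0" by simp
  then have "\<not> snd (zs ! i)" if "i < length zs" for i
    using that unfolding sc_conv by auto
  then have "pf zs = (\<Prod>j<length zs. \<rho> (fst (zs ! j)))"
    unfolding pf_def by (intro prod.cong) auto
  then show ?case using \<open>sc zs = 0\<close> by simp
next
  case (Suc j)
  define s where "s = sc zs"
  define h where "h = (Suc j - s) div 2"
  define c where "c = \<rho> (B * B)"
  define F where "F = (of_nat (fact j) :: complex)"
  have h2: "Suc j - s = 2 * h" "s \<le> Suc j" using Suc.prems by (auto simp: h_def s_def)
  have rec: "coeff (Pol \<rho> (B # replicate j B) zs) h =
    (\<Sum>i<length zs. if snd (zs ! i) then coeff (Pol \<rho> (replicate j B) (upd zs i B)) h else 0)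
    + (if h = 0 then 0 else coeff (Pol \<rho> (replicate j B) (zs @ [(B, True)])) (h - 1))"
  proof -
    have cen: "\<forall>b\<in>set (B # replicate j B). \<rho> b = 0" using B by simp
    have le: "sc zs \<le> Suc (length (replicate j B))" using Suc.prems by simp
    have ev: "even (Suc (length (replicate j B)) - sc zs)" using Suc.prems by simp
    from Pol_coeff_rec[OF Suc.prems(1) cen le ev] show ?thesis
      by (simp only: length_replicate s_def[symmetric] h_def[symmetric])
  qed
  have T1: "coeff (Pol \<rho> (replicate j B) (upd zs i B)) h = F / (2 ^ h * of_nat (fact h)) * c ^ (h + s) * pf zs"
    if i: "i < length zs" "snd (zs ! i)" for i
  proof -
    have fi: "fst (zs ! i) = B" using Suc.prems(2) i by (meson nth_mem)
    have s1: "s \<ge> 1" using sc_upd_pos[OF i] by (simp add: s_def)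
    have scu: "sc (upd zs i B) = s - 1" using sc_upd[OF i(1), of B] i by (simp add: s_def)
    have slot_inv': "slot_inv \<rho> (upd zs i B)" by (rule inv_upd[OF Suc.prems(1)])
    have allB: "\<forall>p\<in>set (upd zs i B). snd p \<longrightarrow> fst p = B"
      using Suc.prems(2) unfolding upd_def by (auto dest: set_update_subset_insert[THEN subsetD])
    have e1: "j - sc (upd zs i B) = Suc j - s" using scu s1 h2 by simp
    have "coeff (Pol \<rho> (replicate j B) (upd zs i B)) ((j - sc (upd zs i B)) div 2) =
      of_nat (fact j) / (2 ^ ((j - sc (upd zs i B)) div 2) * of_nat (fact ((j - sc (upd zs i B)) div 2)))
        * \<rho> (B * B) ^ ((j - sc (upd zs i B)) div 2 + sc (upd zs i B)) * pf (upd zs i B)"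
      using Suc.IH[OF slot_inv' allB] scu s1 h2 e1 by simp
    also have "pf (upd zs i B) = c * pf zs" using pf_upd[OF i fi] by (simp add: c_def)
    finally have A: "coeff (Pol \<rho> (replicate j B) (upd zs i B)) h = F / (2 ^ h * of_nat (fact h)) * c ^ (h + (s - 1)) * (c * pf zs)"
      using e1 scu by (simp add: h_def F_def c_def)
    have pw: "F / (2 ^ h * of_nat (fact h)) * c ^ (h + (s - 1)) * (c * pf zs) = F / (2 ^ h * of_nat (fact h)) * c ^ (h + s) * pf zs"
      using s1 by (cases s) (auto simp: algebra_simps)
    show ?thesis by (simp only: A pw)
  qed
  have S1: "(\<Sum>i<length zs. if snd (zs ! i) then coeff (Pol \<rho> (replicate j B) (upd zs i B)) h else 0)
      = of_nat s * (F / (2 ^ h * of_nat (fact h)) * c ^ (h + s) * pf zs)"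
  proof -
    have "(\<Sum>i<length zs. if snd (zs ! i) then coeff (Pol \<rho> (replicate j B) (upd zs i B)) h else 0)
        = (\<Sum>i<length zs. if snd (zs ! i) then F / (2 ^ h * of_nat (fact h)) * c ^ (h + s) * pf zs else 0)"
      by (rule sum.cong) (auto simp: T1)
    also have "\<dots> = (\<Sum>i\<in>{i\<in>{..<length zs}. snd (zs ! i)}. F / (2 ^ h * of_nat (fact h)) * c ^ (h + s) * pf zs)"
      by (rule sum.inter_filter[symmetric]) simp
    also have "\<dots> = of_nat s * (F / (2 ^ h * of_nat (fact h)) * c ^ (h + s) * pf zs)"
      by (simp add: s_def sc_conv)
    finally show ?thesis .
  qed
  have S2: "(if h = 0 then 0 else coeff (Pol \<rho> (replicate j B) (zs @ [(B, True)])) (h - 1))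
      = (if h = 0 then 0 else F / (2 ^ (h - 1) * of_nat (fact (h - 1))) * c ^ (h + s) * pf zs)"
  proof (cases h)
    case 0 then show ?thesis by simp
  next
    case (Suc h')
    have slot_inv': "slot_inv \<rho> (zs @ [(B, True)])" by (rule inv_app[OF Suc.prems(1) B])
    have allB: "\<forall>p\<in>set (zs @ [(B, True)]). snd p \<longrightarrow> fst p = B" using Suc.prems(2) by auto
    have le: "sc (zs @ [(B, True)]) \<le> j" using h2 Suc by (simp add: s_def)
    have e: "j - sc (zs @ [(B, True)]) = 2 * h'" using h2 Suc by (simp add: s_def)
    have ev': "even (j - sc (zs @ [(B, True)]))" using e by simp
    have "coeff (Pol \<rho> (replicate j B) (zs @ [(B, True)])) h' =
      of_nat (fact j) / (2 ^ h' * of_nat (fact h')) * \<rho> (B * B) ^ (h' + Suc s) * pf (zs @ [(B, True)])"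
      using Suc.IH[OF slot_inv' allB le ev'] e by (simp add: s_def)
    then show ?thesis using Suc by (simp add: pf_app F_def c_def)
  qed
  have "coeff (Pol \<rho> (replicate (Suc j) B) zs) ((Suc j - sc zs) div 2) = coeff (Pol \<rho> (B # replicate j B) zs) h"
    by (simp add: h_def s_def)
  also have "\<dots> = of_nat s * (F / (2 ^ h * of_nat (fact h)) * c ^ (h + s) * pf zs)
      + (if h = 0 then 0 else F / (2 ^ (h - 1) * of_nat (fact (h - 1))) * c ^ (h + s) * pf zs)"
    using rec S1 S2 by simp
  also have "\<dots> = (of_nat s * (F / (2 ^ h * of_nat (fact h))) + (if h = 0 then 0 else F / (2 ^ (h - 1) * of_nat (fact (h - 1))))) * (c ^ (h + s) * pf zs)"
    by (cases "h = 0") (simp_all add: distrib_right mult.assoc)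
  also have "of_nat s * (F / (2 ^ h * of_nat (fact h))) + (if h = 0 then 0 else F / (2 ^ (h - 1) * of_nat (fact (h - 1))))
      = of_nat (fact (Suc j)) / (2 ^ h * of_nat (fact h))"
  proof (cases h)
    case 0
    then have "s = Suc j" using h2 by simp
    then show ?thesis using 0 by (simp add: F_def algebra_simps)
  next
    case (Suc h')
    define E where "E = (2::complex) ^ h' * of_nat (fact h')"
    have E0: "E \<noteq> 0" by (simp add: E_def)
    have D: "(2::complex) ^ h * of_nat (fact h) = 2 * of_nat (Suc h') * E"
      using Suc by (simp add: E_def algebra_simps)
    have D': "(2::complex) ^ (h - 1) * of_nat (fact (h - 1)) = E" using Suc by (simp add: E_def)
    have sj: "of_nat s + 2 * of_nat (Suc h') = (of_nat (Suc j) :: complex)"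
    proof -
      have "s + 2 * Suc h' = Suc j" using h2 Suc by arith
      then have "of_nat (s + 2 * Suc h') = (of_nat (Suc j) :: complex)" by (rule arg_cong)
      then show ?thesis by (simp only: of_nat_add of_nat_mult of_nat_numeral)
    qed
    have fj: "(of_nat (fact (Suc j)) :: complex) = of_nat (Suc j) * F" by (simp add: F_def algebra_simps)
    have "of_nat s * (F / (2 * of_nat (Suc h') * E)) + F / E = (of_nat s + 2 * of_nat (Suc h')) * F / (2 * of_nat (Suc h') * E)"
    proof -
      have n00: "of_nat (2 * Suc h') \<noteq> (0::complex)" by (simp only: of_nat_eq_0_iff) simp
      have n0: "(2 * of_nat (Suc h') :: complex) \<noteq> 0" using n00 by (metis of_nat_mult of_nat_numeral)
      have "(of_nat s + 2 * of_nat (Suc h')) * F / (2 * of_nat (Suc h') * E) =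
          of_nat s * F / (2 * of_nat (Suc h') * E) + (2 * of_nat (Suc h')) * F / ((2 * of_nat (Suc h')) * E)"
        by (simp only: distrib_right add_divide_distrib)
      also have "(2 * of_nat (Suc h')) * F / ((2 * of_nat (Suc h')) * E) = F / E"
        using n0 by (rule mult_divide_mult_cancel_left)
      finally show ?thesis by simp
    qed
    then show ?thesis unfolding D D' fj sj[symmetric] using Suc by simp
  qed
  finally show ?case by (simp only: h_def[symmetric] s_def[symmetric] c_def[symmetric] mult.assoc)
qed

end

definition cN :: "nat \<Rightarrow> complex" where
  "cN N = complex_of_real (1 / sqrt (real N))"

definition Wl :: "('a::ring_1 \<Rightarrow> complex) \<Rightarrow> 'a list \<Rightarrow> complex" where
  "Wl \<rho> bs = (if even (length bs) then coeff (Pol \<rho> bs []) (length bs div 2) else 0)"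

lemma cN_lim: "cN \<longlonglongrightarrow> 0"
proof -
  have "(\<lambda>N. sqrt (inverse (real N))) \<longlonglongrightarrow> sqrt 0"
    by (intro tendsto_real_sqrt lim_inverse_n)
  then have "(\<lambda>N. 1 / sqrt (real N)) \<longlonglongrightarrow> 0"
    by (simp add: real_sqrt_inverse divide_inverse)
  then have "(\<lambda>N. complex_of_real (1 / sqrt (real N))) \<longlonglongrightarrow> complex_of_real 0"
    by (rule tendsto_of_real)
  then show ?thesis by (simp add: cN_def[abs_def])
qed

lemma cN_pow2: "cN N ^ (2 * h) = 1 / of_nat N ^ h"
proof -
  have "cN N ^ (2 * h) = complex_of_real ((1 / sqrt (real N)) ^ 2) ^ h"
    by (simp add: cN_def power_mult of_real_power)
  also have "(1 / sqrt (real N)) ^ 2 = 1 / real N"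
    by (simp add: power_divide)
  finally show ?thesis by (simp add: power_divide)
qed

lemma poly_lim:
  fixes P :: "complex poly"
  assumes "degree P \<le> d"
  shows "(\<lambda>N. poly P (of_nat N) / of_nat N ^ d) \<longlonglongrightarrow> coeff P d"
proof -
  have pe: "poly P x = (\<Sum>i\<le>d. coeff P i * x ^ i)" for x
  proof -
    have "poly P x = (\<Sum>i\<le>degree P. coeff P i * x ^ i)" by (rule poly_altdef)
    also have "\<dots> = (\<Sum>i\<le>d. coeff P i * x ^ i)"
      by (rule sum.mono_neutral_left) (auto simp: assms coeff_eq_0)
    finally show ?thesis .
  qed
  have ev: "\<forall>\<^sub>F N in sequentially. (\<Sum>i\<le>d. coeff P i * (1 / of_nat N) ^ (d - i)) = poly P (of_nat N) / of_nat N ^ d"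
  proof (rule eventually_sequentiallyI[of 1])
    fix N :: nat assume "1 \<le> N"
    then have N0: "(of_nat N :: complex) \<noteq> 0" by simp
    have "poly P (of_nat N) / of_nat N ^ d = (\<Sum>i\<le>d. coeff P i * (of_nat N ^ i / of_nat N ^ d))"
      by (simp add: pe sum_divide_distrib)
    also have "\<dots> = (\<Sum>i\<le>d. coeff P i * (1 / of_nat N) ^ (d - i))"
    proof (rule sum.cong[OF refl])
      fix i assume "i \<in> {..d}"
      then have "i \<le> d" by simp
      then have "(of_nat N :: complex) ^ i / of_nat N ^ d = (1 / of_nat N) ^ (d - i)"
        using N0 by (simp add: power_diff power_divide)
      then show "coeff P i * (of_nat N ^ i / of_nat N ^ d) = coeff P i * (1 / of_nat N) ^ (d - i)" by simp
    qed
    finally show "(\<Sum>i\<le>d. coeff P i * (1 / of_nat N) ^ (d - i)) = poly P (of_nat N) / of_nat N ^ d" by simp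
  qed
  have inv0: "(\<lambda>N. 1 / (of_nat N :: complex)) \<longlonglongrightarrow> 0"
    using lim_inverse_n[where 'a=complex] by (simp add: divide_inverse)
  have "(\<lambda>N. \<Sum>i\<le>d. coeff P i * (1 / of_nat N) ^ (d - i)) \<longlonglongrightarrow> (\<Sum>i\<le>d. coeff P i * 0 ^ (d - i))"
    by (intro tendsto_sum tendsto_mult tendsto_const tendsto_power inv0)
  also have "(\<Sum>i\<le>d. coeff P i * (0::complex) ^ (d - i)) = coeff P d"
  proof -
    have "(\<Sum>i\<le>d. coeff P i * (0::complex) ^ (d - i)) = (\<Sum>i\<le>d. if i = d then coeff P i else 0)"
      by (rule sum.cong) auto
    then show ?thesis by simp
  qed
  finally show ?thesis using ev by (rule Lim_transform_eventually)
qed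

context addst
begin

lemma V_one_poly: "V \<rho> N bs (\<lambda>_. 1) = poly (Pol \<rho> bs []) (of_nat N)"
proof -
  have "zf ([] :: ('a \<times> bool) list) = (\<lambda>_. 1)" by (simp add: fun_eq_iff zf_def)
  then have "V \<rho> N bs (\<lambda>_. 1) = G \<rho> bs [] N" by (simp add: G_def)
  then show ?thesis by (simp add: G_poly)
qed

lemma QL:
  assumes "\<forall>b\<in>set bs. \<rho> b = 0"
  shows "(\<lambda>N. cN N ^ length bs * V \<rho> N bs (\<lambda>_. 1)) \<longlonglongrightarrow> Wl \<rho> bs"
proof -
  have inv0: "slot_inv \<rho> ([] :: ('a \<times> bool) list)" by (simp add: slot_inv_def)
  have deg: "degree (Pol \<rho> bs []) \<le> length bs div 2"
    using Pol_zero_degree[OF inv0 assms] by (simp add: sc_def)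
  show ?thesis
  proof (cases "even (length bs)")
    case True
    then obtain h where h: "length bs = 2 * h" by blast
    have "(\<lambda>N. poly (Pol \<rho> bs []) (of_nat N) / of_nat N ^ h) \<longlonglongrightarrow> coeff (Pol \<rho> bs []) h"
      using deg h by (intro poly_lim) simp
    moreover have "cN N ^ length bs * V \<rho> N bs (\<lambda>_. 1) = poly (Pol \<rho> bs []) (of_nat N) / of_nat N ^ h" for N
      by (simp add: h cN_pow2 V_one_poly)
    ultimately show ?thesis using True h by (simp add: Wl_def)
  next
    case False
    then obtain h where h: "length bs = 2 * h + 1" using oddE by blast
    have "(\<lambda>N. poly (Pol \<rho> bs []) (of_nat N) / of_nat N ^ h) \<longlonglongrightarrow> coeff (Pol \<rho> bs []) h"
      using deg h by (intro poly_lim) simp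
    then have "(\<lambda>N. cN N * (poly (Pol \<rho> bs []) (of_nat N) / of_nat N ^ h)) \<longlonglongrightarrow> 0 * coeff (Pol \<rho> bs []) h"
      by (intro tendsto_mult cN_lim)
    moreover have "cN N ^ length bs * V \<rho> N bs (\<lambda>_. 1) = cN N * (poly (Pol \<rho> bs []) (of_nat N) / of_nat N ^ h)" for N
      by (simp add: h cN_pow2 V_one_poly)
    ultimately show ?thesis using False by (simp add: Wl_def)
  qed
qed

lemma Wl_diag:
  assumes B: "\<rho> B = 0"
  shows "Wl \<rho> (replicate m B) = (if even m then of_nat (fact m) / (2 ^ (m div 2) * of_nat (fact (m div 2))) * \<rho> (B * B) ^ (m div 2) else 0)"
proof (cases "even m")
  case True
  have inv0: "slot_inv \<rho> ([] :: ('a \<times> bool) list)" by (simp add: slot_inv_def)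
  have "coeff (Pol \<rho> (replicate m B) []) ((m - sc ([] :: ('a \<times> bool) list)) div 2) =
      of_nat (fact m) / (2 ^ ((m - sc ([] :: ('a \<times> bool) list)) div 2) * of_nat (fact ((m - sc ([] :: ('a \<times> bool) list)) div 2)))
        * \<rho> (B * B) ^ ((m - sc ([] :: ('a \<times> bool) list)) div 2 + sc ([] :: ('a \<times> bool) list)) * pf []"
    using Pol_diag[OF B inv0] True by (simp add: sc_def)
  then show ?thesis using True by (simp add: Wl_def sc_def pf_def)
qed (simp add: Wl_def)

end

definition Lm :: "'i set \<Rightarrow> nat \<Rightarrow> 'i list set" where
  "Lm S m = {g. set g \<subseteq> S \<and> length g = m}"

lemma Lm_finite: "finite S \<Longrightarrow> finite (Lm S m)"
  unfolding Lm_def by (rule finite_lists_length_eq)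

lemma Lm_0: "Lm S 0 = {[]}"
  by (auto simp: Lm_def)

lemma Lm_Suc: "Lm S (Suc m) = (\<lambda>(i, g). i # g) ` (S \<times> Lm S m)"
proof (intro equalityI subsetI)
  fix g assume "g \<in> Lm S (Suc m)"
  then obtain i g' where "g = i # g'" "i \<in> S" "g' \<in> Lm S m" by (cases g) (auto simp: Lm_def)
  then show "g \<in> (\<lambda>(i, g). i # g) ` (S \<times> Lm S m)" by force
next
  fix g assume "g \<in> (\<lambda>(i, g). i # g) ` (S \<times> Lm S m)"
  then show "g \<in> Lm S (Suc m)" by (auto simp: Lm_def)
qed

lemma sum_Lm_Suc:
  assumes "finite S"
  shows "(\<Sum>g\<in>Lm S (Suc m). f g) = (\<Sum>i\<in>S. \<Sum>g\<in>Lm S m. f (i # g))"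
proof -
  have inj: "inj_on (\<lambda>(i, g). i # g) (S \<times> Lm S m)" by (auto simp: inj_on_def)
  have "(\<Sum>g\<in>Lm S (Suc m). f g) = (\<Sum>p\<in>S \<times> Lm S m. f (fst p # snd p))"
    unfolding Lm_Suc by (subst sum.reindex[OF inj]) (simp add: split_def comp_def)
  also have "\<dots> = (\<Sum>i\<in>S. \<Sum>g\<in>Lm S m. f (i # g))"
    by (simp add: sum.cartesian_product split_def)
  finally show ?thesis .
qed

lemma power_sum_Lm:
  fixes f :: "'i \<Rightarrow> 'c::comm_semiring_1"
  assumes "finite S"
  shows "(\<Sum>i\<in>S. f i) ^ m = (\<Sum>g\<in>Lm S m. prod_list (map f g))"
proof (induction m)
  case 0 then show ?case by (simp add: Lm_0)
next
  case (Suc m)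
  have "(\<Sum>i\<in>S. f i) ^ Suc m = (\<Sum>i\<in>S. f i) * (\<Sum>g\<in>Lm S m. prod_list (map f g))"
    using Suc by simp
  also have "\<dots> = (\<Sum>i\<in>S. \<Sum>g\<in>Lm S m. f i * prod_list (map f g))"
    by (subst sum_distrib_right) (simp add: sum_distrib_left)
  also have "\<dots> = (\<Sum>g\<in>Lm S (Suc m). prod_list (map f g))"
    using sum_Lm_Suc[OF assms, where m=m and f="\<lambda>g. prod_list (map f g)"] by simp
  finally show ?case .
qed

lemma IE_Lm:
  fixes \<phi> :: "'i list \<Rightarrow> 'c::comm_ring_1"
  assumes "finite I"
  shows "(\<Sum>T\<in>Pow I. (-1) ^ (card I - card T) * (\<Sum>g\<in>Lm T m. \<phi> g)) = (\<Sum>g\<in>{g\<in>Lm I m. set g = I}. \<phi> g)"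
proof -
  define f where "f U = (\<Sum>g\<in>{g\<in>Lm U m. set g = U}. \<phi> g)" for U
  define G where "G T = (\<Sum>g\<in>Lm T m. \<phi> g)" for T
  have "G S = sum f (Pow S)" if "finite S" for S
  proof -
    have "G S = (\<Sum>U\<in>Pow S. \<Sum>g\<in>{g \<in> Lm S m. set g = U}. \<phi> g)"
      unfolding G_def
      by (rule sum.group[symmetric]) (auto simp: that Lm_finite[OF that, unfolded Lm_def] Lm_def)
    also have "\<dots> = sum f (Pow S)"
      unfolding f_def by (intro sum.cong refl) (auto simp: Lm_def)
    finally show ?thesis .
  qed
  then have "f I = (\<Sum>T\<in>Pow I. (-1) ^ (card I - card T) * G T)"
    by (rule inclusion_exclusion_mobius[OF _ assms])
  then show ?thesis by (simp add: f_def G_def)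
qed

lemma card_perm_Lm:
  assumes "finite I"
  shows "card {g\<in>Lm I (card I). set g = I} = fact (card I)"
proof -
  have "{g\<in>Lm I (card I). set g = I} = {xs. length xs = card I \<and> distinct xs \<and> set xs \<subseteq> I}"
  proof (intro equalityI subsetI)
    fix g assume "g \<in> {g\<in>Lm I (card I). set g = I}"
    then show "g \<in> {xs. length xs = card I \<and> distinct xs \<and> set xs \<subseteq> I}"
      by (auto simp: Lm_def intro: card_distinct)
  next
    fix g assume g: "g \<in> {xs. length xs = card I \<and> distinct xs \<and> set xs \<subseteq> I}"
    then have "card (set g) = card I" by (simp add: distinct_card)
    then have "set g = I" using card_subset_eq[OF assms, of "set g"] g by auto
    then show "g \<in> {g\<in>Lm I (card I). set g = I}" using g by (simp add: Lm_def)
  qed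
  also have "card \<dots> = \<Prod>{card I - card I + 1 .. card I}"
    by (rule card_lists_distinct_length_eq[OF assms]) simp
  also have "\<dots> = fact (card I)"
    by (simp add: fact_prod)
  finally show ?thesis .
qed

context addst
begin

lemma V_rep_sum:
  assumes "finite S"
  shows "V \<rho> N (v @ replicate m (sum a S)) z = (\<Sum>g\<in>Lm S m. V \<rho> N (v @ map a g) z)"
proof (induction m arbitrary: v)
  case 0 then show ?case by (simp add: Lm_0)
next
  case (Suc m)
  have "V \<rho> N (v @ replicate (Suc m) (sum a S)) z = V \<rho> N (v @ sum a S # replicate m (sum a S)) z"
    by simp
  also have "\<dots> = (\<Sum>i\<in>S. V \<rho> N (v @ a i # replicate m (sum a S)) z)"
    by (rule V_letter_sum[OF assms])
  also have "\<dots> = (\<Sum>i\<in>S. \<Sum>g\<in>Lm S m. V \<rho> N ((v @ [a i]) @ map a g) z)"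
    by (intro sum.cong refl) (metis Suc.IH append_Cons append_Nil append_assoc)
  also have "\<dots> = (\<Sum>g\<in>Lm S (Suc m). V \<rho> N (v @ map a g) z)"
    using sum_Lm_Suc[OF assms, where m=m and f="\<lambda>g. V \<rho> N (v @ map a g) z"] by simp
  finally show ?case .
qed

lemma Wl_swap:
  assumes "\<forall>x\<in>set v. \<rho> x = 0" "\<forall>x\<in>set w. \<rho> x = 0" "\<rho> a = 0" "\<rho> b = 0" "\<rho> (a * b) = \<rho> (b * a)"
  shows "Wl \<rho> (v @ a # b # w) = Wl \<rho> (v @ b # a # w)"
proof -
  define L where "L = length (v @ a # b # w)"
  define D where "D = a * b - b * a"
  have D0: "\<rho> D = 0" using assms(5) by (simp add: D_def diff)
  have l1: "(\<lambda>N. cN N ^ L * V \<rho> N (v @ a # b # w) (\<lambda>_. 1)) \<longlonglongrightarrow> Wl \<rho> (v @ a # b # w)"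
    unfolding L_def by (rule QL) (use assms in auto)
  have l2: "(\<lambda>N. cN N ^ L * V \<rho> N (v @ b # a # w) (\<lambda>_. 1)) \<longlonglongrightarrow> Wl \<rho> (v @ b # a # w)"
  proof -
    have "L = length (v @ b # a # w)" by (simp add: L_def)
    then show ?thesis by (simp only:) (rule QL, use assms in auto)
  qed
  have l3: "(\<lambda>N. cN N * (cN N ^ length (v @ D # w) * V \<rho> N (v @ D # w) (\<lambda>_. 1))) \<longlonglongrightarrow> 0 * Wl \<rho> (v @ D # w)"
    by (intro tendsto_mult cN_lim QL) (use assms D0 in auto)
  have eq: "cN N ^ L * V \<rho> N (v @ a # b # w) (\<lambda>_. 1) - cN N ^ L * V \<rho> N (v @ b # a # w) (\<lambda>_. 1)
      = cN N * (cN N ^ length (v @ D # w) * V \<rho> N (v @ D # w) (\<lambda>_. 1))" for N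
  proof -
    have "cN N ^ L = cN N * cN N ^ length (v @ D # w)" by (simp add: L_def)
    then show ?thesis using V_swap[of N v a b w "\<lambda>_. 1"] by (simp add: D_def right_diff_distrib[symmetric])
  qed
  have "(\<lambda>N. cN N ^ L * V \<rho> N (v @ a # b # w) (\<lambda>_. 1) - cN N ^ L * V \<rho> N (v @ b # a # w) (\<lambda>_. 1))
      \<longlonglongrightarrow> Wl \<rho> (v @ a # b # w) - Wl \<rho> (v @ b # a # w)"
    by (intro tendsto_diff l1 l2)
  moreover have "(\<lambda>N. cN N ^ L * V \<rho> N (v @ a # b # w) (\<lambda>_. 1) - cN N ^ L * V \<rho> N (v @ b # a # w) (\<lambda>_. 1))
      \<longlonglongrightarrow> 0"
    using l3 unfolding eq by simp
  ultimately have "Wl \<rho> (v @ a # b # w) - Wl \<rho> (v @ b # a # w) = 0"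
    by (rule LIMSEQ_unique)
  then show ?thesis by simp
qed

lemma Wl_rep_sum:
  assumes "finite S" "\<forall>i\<in>S. \<rho> (a i) = 0"
  shows "Wl \<rho> (replicate m (sum a S)) = (\<Sum>g\<in>Lm S m. Wl \<rho> (map a g))"
proof -
  have c: "\<rho> (sum a S) = 0" using assms by (simp add: sum)
  have l1: "(\<lambda>N. cN N ^ length (replicate m (sum a S)) * V \<rho> N (replicate m (sum a S)) (\<lambda>_. 1)) \<longlonglongrightarrow> Wl \<rho> (replicate m (sum a S))"
    by (rule QL) (use c in simp)
  have l2: "(\<lambda>N. \<Sum>g\<in>Lm S m. cN N ^ length (map a g) * V \<rho> N (map a g) (\<lambda>_. 1)) \<longlonglongrightarrow> (\<Sum>g\<in>Lm S m. Wl \<rho> (map a g))"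
  proof (intro tendsto_sum QL)
    fix g assume "g \<in> Lm S m"
    then show "\<forall>b\<in>set (map a g). \<rho> b = 0" using assms(2) by (auto simp: Lm_def)
  qed
  have eq: "cN N ^ length (replicate m (sum a S)) * V \<rho> N (replicate m (sum a S)) (\<lambda>_. 1)
      = (\<Sum>g\<in>Lm S m. cN N ^ length (map a g) * V \<rho> N (map a g) (\<lambda>_. 1))" for N
  proof -
    have "V \<rho> N (replicate m (sum a S)) (\<lambda>_. 1) = (\<Sum>g\<in>Lm S m. V \<rho> N (map a g) (\<lambda>_. 1))"
      using V_rep_sum[OF assms(1), where N=N and v="[]" and m=m and a=a and z="\<lambda>_. 1"] by simp
    moreover have "(\<Sum>g\<in>Lm S m. cN N ^ length (map a g) * V \<rho> N (map a g) (\<lambda>_. 1)) = (\<Sum>g\<in>Lm S m. cN N ^ m * V \<rho> N (map a g) (\<lambda>_. 1))"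
      by (intro sum.cong refl) (simp add: Lm_def)
    ultimately show ?thesis by (simp add: sum_distrib_left)
  qed
  show ?thesis using l1 l2 unfolding eq by (rule LIMSEQ_unique)
qed

end

locale qsetup = addst \<rho> for \<rho> :: "'a::ring_1 \<Rightarrow> complex" +
  fixes A :: "nat \<Rightarrow> 'a" and k :: nat
  assumes cenA: "\<And>a. a < k \<Longrightarrow> \<rho> (A a) = 0"
    and comA: "\<And>a b. a < k \<Longrightarrow> b < k \<Longrightarrow> \<rho> (A a * A b) = \<rho> (A b * A a)"
begin

lemma Wl_insort:
  assumes "set v \<subseteq> {..<k}" "set s \<subseteq> {..<k}" "set w \<subseteq> {..<k}" "a < k"
  shows "Wl \<rho> (map A (v @ insort a s @ w)) = Wl \<rho> (map A (v @ a # s @ w))"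
  using assms
proof (induction s arbitrary: v)
  case Nil then show ?case by simp
next
  case (Cons b s)
  show ?case
  proof (cases "a \<le> b")
    case True then show ?thesis by simp
  next
    case False
    have "Wl \<rho> (map A (v @ insort a (b # s) @ w)) = Wl \<rho> (map A ((v @ [b]) @ insort a s @ w))"
      using False by simp
    also have "\<dots> = Wl \<rho> (map A ((v @ [b]) @ a # s @ w))"
      by (rule Cons.IH) (use Cons.prems in auto)
    also have "\<dots> = Wl \<rho> (map A v @ A b # A a # map A (s @ w))" by simp
    also have "\<dots> = Wl \<rho> (map A v @ A a # A b # map A (s @ w))"
    proof (rule Wl_swap)
      show "\<forall>x\<in>set (map A v). \<rho> x = 0" using Cons.prems(1) cenA by auto
      show "\<forall>x\<in>set (map A (s @ w)). \<rho> x = 0" using Cons.prems(2,3) cenA by auto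
      show "\<rho> (A b) = 0" using Cons.prems(2) cenA by simp
      show "\<rho> (A a) = 0" using Cons.prems(4) cenA by simp
      show "\<rho> (A b * A a) = \<rho> (A a * A b)" using Cons.prems(2,4) comA by simp
    qed
    also have "\<dots> = Wl \<rho> (map A (v @ a # (b # s) @ w))" by simp
    finally show ?thesis .
  qed
qed

lemma Wl_sort:
  assumes "set v \<subseteq> {..<k}" "set u \<subseteq> {..<k}" "set w \<subseteq> {..<k}"
  shows "Wl \<rho> (map A (v @ sort u @ w)) = Wl \<rho> (map A (v @ u @ w))"
  using assms
proof (induction u arbitrary: v)
  case Nil then show ?case by simp
next
  case (Cons a u)
  have "Wl \<rho> (map A (v @ sort (a # u) @ w)) = Wl \<rho> (map A (v @ insort a (sort u) @ w))" by simp
  also have "\<dots> = Wl \<rho> (map A (v @ a # sort u @ w))"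
    by (rule Wl_insort) (use Cons.prems in auto)
  also have "\<dots> = Wl \<rho> (map A ((v @ [a]) @ sort u @ w))" by simp
  also have "\<dots> = Wl \<rho> (map A ((v @ [a]) @ u @ w))"
    by (rule Cons.IH) (use Cons.prems in auto)
  finally show ?case by simp
qed

lemma Wl_mset:
  assumes "set u \<subseteq> {..<k}" "mset u' = mset u"
  shows "Wl \<rho> (map A u') = Wl \<rho> (map A u)"
proof -
  have s': "set u' \<subseteq> {..<k}" using assms by (metis set_mset_mset)
  have "sort u' = sort u"
    by (rule properties_for_sort) (use assms in auto)
  then show ?thesis
    using Wl_sort[of "[]" u "[]"] Wl_sort[of "[]" u' "[]"] assms s' by simp
qed

lemma Wl_polar:
  assumes "set u \<subseteq> {..<k}"
  shows "of_nat (fact (length u)) * Wl \<rho> (map A u) =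
    (\<Sum>T\<in>Pow {..<length u}. (-1) ^ (length u - card T) * Wl \<rho> (replicate (length u) (\<Sum>i\<in>T. A (u ! i))))"
proof -
  define m where "m = length u"
  define I where "I = {..<m}"
  have cI: "card I = m" by (simp add: I_def)
  have uk: "u ! i < k" if "i < m" for i
    using assms that nth_mem unfolding m_def by blast
  have cen': "\<forall>i\<in>T. \<rho> (A (u ! i)) = 0" if "T \<subseteq> I" for T
    using that uk by (auto simp: I_def intro!: cenA)
  have "(\<Sum>T\<in>Pow I. (-1) ^ (m - card T) * Wl \<rho> (replicate m (\<Sum>i\<in>T. A (u ! i))))
      = (\<Sum>T\<in>Pow I. (-1) ^ (card I - card T) * (\<Sum>g\<in>Lm T m. Wl \<rho> (map (\<lambda>i. A (u ! i)) g)))"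
  proof (intro sum.cong refl)
    fix T assume "T \<in> Pow I"
    then have T: "T \<subseteq> I" "finite T" by (auto simp: I_def finite_subset)
    show "(-1) ^ (m - card T) * Wl \<rho> (replicate m (\<Sum>i\<in>T. A (u ! i))) =
        (-1) ^ (card I - card T) * (\<Sum>g\<in>Lm T m. Wl \<rho> (map (\<lambda>i. A (u ! i)) g))"
      using Wl_rep_sum[OF T(2) cen'[OF T(1)]] cI by simp
  qed
  also have "\<dots> = (\<Sum>g\<in>{g\<in>Lm I m. set g = I}. Wl \<rho> (map (\<lambda>i. A (u ! i)) g))"
    by (rule IE_Lm) (simp add: I_def)
  also have "\<dots> = (\<Sum>g\<in>{g\<in>Lm I m. set g = I}. Wl \<rho> (map A u))"
  proof (intro sum.cong refl)
    fix g assume g: "g \<in> {g\<in>Lm I m. set g = I}"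
    have lg: "length g = m" and sg: "set g = I" using g by (auto simp: Lm_def)
    have "card (set g) = length g" using cI lg sg by simp
    then have d: "distinct g" by (rule card_distinct)
    have "set g = set [0..<m]" using sg by (simp add: I_def atLeast0LessThan)
    then have "mset g = mset [0..<m]"
      using set_eq_iff_mset_eq_distinct[OF d distinct_upt] by blast
    then have "mset (map (\<lambda>i. u ! i) g) = mset (map (\<lambda>i. u ! i) [0..<m])"
      by (simp only: mset_map)
    also have "map (\<lambda>i. u ! i) [0..<m] = u" by (simp add: m_def map_nth)
    finally have "mset (map (\<lambda>i. u ! i) g) = mset u" .
    then have "Wl \<rho> (map A (map (\<lambda>i. u ! i) g)) = Wl \<rho> (map A u)"
      by (rule Wl_mset[OF assms])
    then show "Wl \<rho> (map (\<lambda>i. A (u ! i)) g) = Wl \<rho> (map A u)" by (simp add: comp_def)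
  qed
  also have "\<dots> = of_nat (fact m) * Wl \<rho> (map A u)"
  proof -
    have "card {g\<in>Lm I m. set g = I} = fact m" using card_perm_Lm[of I] cI by (simp add: I_def)
    then show ?thesis by simp
  qed
  finally have "(\<Sum>T\<in>Pow I. (-1) ^ (m - card T) * Wl \<rho> (replicate m (\<Sum>i\<in>T. A (u ! i)))) = of_nat (fact m) * Wl \<rho> (map A u)" .
  then show ?thesis by (simp only: m_def I_def)
qed

end

lemma centered_gaussian_moment:
  assumes P: "prob_space M" and G: "centered_gaussian M Y"
  shows "integrable M (\<lambda>x. Y x ^ m) \<and>
    integral\<^sup>L M (\<lambda>x. Y x ^ m) = (if even m then fact m / (2 ^ (m div 2) * fact (m div 2)) * (integral\<^sup>L M (\<lambda>x. Y x ^ 2)) ^ (m div 2) else 0)"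
proof -
  interpret prob_space M by (rule P)
  have meas: "Y \<in> borel_measurable M" using G by (simp add: centered_gaussian_def)
  consider (z) "AE x in M. Y x = 0" | (n) \<sigma> where "\<sigma> > 0" "distributed M lborel Y (normal_density 0 \<sigma>)"
    using G unfolding centered_gaussian_def by blast
  then show ?thesis
  proof cases
    case z
    show ?thesis
    proof (cases m)
      case 0
      then show ?thesis by (simp add: prob_space)
    next
      case (Suc m')
      have ae: "AE x in M. Y x ^ j = 0" if "j > 0" for j
        using z by eventually_elim (use that in simp)
      have i0: "integral\<^sup>L M (\<lambda>x. Y x ^ j) = 0" if "j > 0" for j
        using integral_cong_AE[of "\<lambda>x. Y x ^ j" M "\<lambda>_. 0"] ae[OF that] meas by simp
      have int: "integrable M (\<lambda>x. Y x ^ m)"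
        using integrable_cong_AE[of "\<lambda>x. Y x ^ m" M "\<lambda>_. 0"] ae[of m] meas Suc by simp
      show ?thesis using int i0[of m] i0[of 2] Suc by (auto simp: power_0_left)
    qed
  next
    case n
    have int: "integrable M (\<lambda>x. Y x ^ j)" for j
    proof -
      have "integrable lborel (\<lambda>x. normal_density 0 \<sigma> x * (x - 0) ^ j)"
        using n(1) by (rule integrable_normal_moment)
      then show ?thesis
        using distributed_integrable[OF n(2), of "\<lambda>x. x ^ j"] by simp
    qed
    have I: "integral\<^sup>L M (\<lambda>x. Y x ^ j) = integral\<^sup>L lborel (\<lambda>x. normal_density 0 \<sigma> x * (x - 0) ^ j)" for j
      using distributed_integral[OF n(2), of "\<lambda>x. x ^ j"] by simp
    have I2: "integral\<^sup>L M (\<lambda>x. Y x ^ 2) = \<sigma>\<^sup>2"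
    proof -
      have "integral\<^sup>L lborel (\<lambda>x. normal_density 0 \<sigma> x * x ^ 2) = fact 2 / ((2 / \<sigma>\<^sup>2) ^ 1 * fact 1)"
        using integral_normal_moment_even[OF n(1), of 0 1] by (simp only: diff_zero mult_1_right)
      also have "\<dots> = \<sigma>\<^sup>2" using n(1) by simp
      finally show ?thesis using I[of 2] by (simp only: diff_zero)
    qed
    show ?thesis
    proof (cases "even m")
      case True
      then obtain h where h: "m = 2 * h" by blast
      have "integral\<^sup>L M (\<lambda>x. Y x ^ m) = fact (2 * h) / ((2 / \<sigma>\<^sup>2) ^ h * fact h)"
        using I[of m] integral_normal_moment_even[OF n(1), of 0 h] h by simp
      also have "\<dots> = fact m / (2 ^ (m div 2) * fact (m div 2)) * (\<sigma>\<^sup>2) ^ (m div 2)"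
        using n(1) h by (simp add: power_divide field_simps)
      finally show ?thesis using int True I2 by simp
    next
      case False
      then obtain h where h: "m = 2 * h + 1" using oddE by blast
      have "integral\<^sup>L M (\<lambda>x. Y x ^ m) = 0"
        using I[of m] integral_normal_moment_odd[OF n(1), of 0 h] h by simp
      then show ?thesis using int False by simp
    qed
  qed
qed


lemma prod_list_nth: "prod_list (map f u) = (\<Prod>i<length u. f (u ! i))"
proof -
  have "prod_list (map f u) = prod_list (map (\<lambda>i. f (u ! i)) [0..<length u])"
    by (rule arg_cong[where f=prod_list], rule nth_equalityI) auto
  also have "\<dots> = (\<Prod>i\<in>set [0..<length u]. f (u ! i))"
    by (rule prod.distinct_set_conv_list[OF distinct_upt, symmetric])
  finally show ?thesis by (simp add: atLeast0LessThan)
qed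

lemma polar_identity:
  fixes y :: "nat \<Rightarrow> 'c::comm_ring_1"
  shows "of_nat (fact m) * (\<Prod>i<m. y i) = (\<Sum>T\<in>Pow {..<m}. (-1) ^ (m - card T) * (\<Sum>i\<in>T. y i) ^ m)"
proof -
  define I where "I = {..<m}"
  have cI: "card I = m" by (simp add: I_def)
  have "(\<Sum>T\<in>Pow I. (-1) ^ (m - card T) * (\<Sum>i\<in>T. y i) ^ m)
      = (\<Sum>T\<in>Pow I. (-1) ^ (card I - card T) * (\<Sum>g\<in>Lm T m. prod_list (map y g)))"
  proof (intro sum.cong refl)
    fix T assume "T \<in> Pow I"
    then have "finite T" by (auto simp: I_def finite_subset)
    then show "(-1) ^ (m - card T) * (\<Sum>i\<in>T. y i) ^ m = (-1) ^ (card I - card T) * (\<Sum>g\<in>Lm T m. prod_list (map y g))"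
      using power_sum_Lm[where S=T and f=y and m=m] cI by simp
  qed
  also have "\<dots> = (\<Sum>g\<in>{g\<in>Lm I m. set g = I}. prod_list (map y g))"
    by (rule IE_Lm) (simp add: I_def)
  also have "\<dots> = (\<Sum>g\<in>{g\<in>Lm I m. set g = I}. \<Prod>i\<in>I. y i)"
  proof (intro sum.cong refl)
    fix g assume g: "g \<in> {g\<in>Lm I m. set g = I}"
    have lg: "length g = m" and sg: "set g = I" using g by (auto simp: Lm_def)
    have "card (set g) = length g" using cI lg sg by simp
    then have d: "distinct g" by (rule card_distinct)
    show "prod_list (map y g) = (\<Prod>i\<in>I. y i)"
      using prod.distinct_set_conv_list[OF d, of y] sg by simp
  qed
  also have "\<dots> = of_nat (fact m) * (\<Prod>i\<in>I. y i)"
  proof -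
    have "card {g\<in>Lm I m. set g = I} = fact m" using card_perm_Lm[of I] cI by (simp add: I_def)
    then show ?thesis by simp
  qed
  finally show ?thesis by (simp add: I_def)
qed

locale fullsetup = qsetup \<rho> A k for \<rho> :: "'a::ring_1 \<Rightarrow> complex" and A k +
  fixes M :: "'b measure" and X :: "nat \<Rightarrow> 'b \<Rightarrow> real"
  assumes prob: "prob_space M"
    and gauss: "jointly_centered_gaussian M k X"
    and cov: "\<And>a b. a < k \<Longrightarrow> b < k \<Longrightarrow> complex_of_real (integral\<^sup>L M (\<lambda>x. X a x * X b x)) = \<rho> (A a * A b)"
begin

lemma sum_regroup:
  assumes "finite T" "\<forall>i\<in>T. u i < k"
  shows "(\<Sum>i\<in>T. f (u i)) = (\<Sum>b<k. real (card {i\<in>T. u i = b}) * f b)"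
proof -
  have "(\<Sum>i\<in>T. f (u i)) = (\<Sum>b<k. \<Sum>i\<in>{i\<in>T. u i = b}. f (u i))"
    by (rule sum.group[symmetric]) (use assms in auto)
  also have "\<dots> = (\<Sum>b<k. real (card {i\<in>T. u i = b}) * f b)"
  proof (intro sum.cong refl)
    fix b
    have "(\<Sum>i\<in>{i\<in>T. u i = b}. f (u i)) = (\<Sum>i\<in>{i\<in>T. u i = b}. f b)"
      by (rule sum.cong) auto
    then show "(\<Sum>i\<in>{i\<in>T. u i = b}. f (u i)) = real (card {i\<in>T. u i = b}) * f b" by simp
  qed
  finally show ?thesis .
qed

lemma Y_gauss:
  assumes "finite T" "\<forall>i\<in>T. u i < k"
  shows "centered_gaussian M (\<lambda>x. \<Sum>i\<in>T. X (u i) x)"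
proof -
  have "(\<lambda>x. \<Sum>i\<in>T. X (u i) x) = (\<lambda>x. \<Sum>b<k. real (card {i\<in>T. u i = b}) * X b x)"
  proof (rule ext)
    fix x show "(\<Sum>i\<in>T. X (u i) x) = (\<Sum>b<k. real (card {i\<in>T. u i = b}) * X b x)"
      by (rule sum_regroup[OF assms, where f="\<lambda>a. X a x"])
  qed
  moreover have "centered_gaussian M (\<lambda>x. \<Sum>b<k. real (card {i\<in>T. u i = b}) * X b x)"
    using gauss unfolding jointly_centered_gaussian_def
    by (rule allE[where x="\<lambda>b. real (card {i\<in>T. u i = b})"])
  ultimately show ?thesis by simp
qed

lemma Y_moment:
  assumes "finite T" "\<forall>i\<in>T. u i < k"
  shows "integrable M (\<lambda>x. (\<Sum>i\<in>T. X (u i) x) ^ m) \<and>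
    integral\<^sup>L M (\<lambda>x. (\<Sum>i\<in>T. X (u i) x) ^ m) = (if even m then fact m / (2 ^ (m div 2) * fact (m div 2)) * (integral\<^sup>L M (\<lambda>x. (\<Sum>i\<in>T. X (u i) x) ^ 2)) ^ (m div 2) else 0)"
  by (rule centered_gaussian_moment[OF prob Y_gauss[OF assms]])

lemma prod_integrable_value:
  assumes "set u \<subseteq> {..<k}"
  shows "integrable M (\<lambda>x. \<Prod>i<length u. X (u ! i) x) \<and>
    fact (length u) * integral\<^sup>L M (\<lambda>x. \<Prod>i<length u. X (u ! i) x) =
      (\<Sum>T\<in>Pow {..<length u}. (-1) ^ (length u - card T) * integral\<^sup>L M (\<lambda>x. (\<Sum>i\<in>T. X (u ! i) x) ^ length u))"
proof -
  define m where "m = length u"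
  have uk: "\<forall>i\<in>T. u ! i < k" if "T \<in> Pow {..<m}" for T
    using that assms nth_mem unfolding m_def by blast
  have fin: "finite T" if "T \<in> Pow {..<m}" for T
    using that by (auto intro: finite_subset)
  have intY: "integrable M (\<lambda>x. (\<Sum>i\<in>T. X (u ! i) x) ^ m)" if "T \<in> Pow {..<m}" for T
    using Y_moment[OF fin[OF that] uk[OF that]] by blast
  have pw: "(\<lambda>x. \<Prod>i<m. X (u ! i) x) = (\<lambda>x. (1 / fact m) * (\<Sum>T\<in>Pow {..<m}. (-1) ^ (m - card T) * (\<Sum>i\<in>T. X (u ! i) x) ^ m))"
  proof
    fix x
    have "fact m * (\<Prod>i<m. X (u ! i) x) = (\<Sum>T\<in>Pow {..<m}. (-1) ^ (m - card T) * (\<Sum>i\<in>T. X (u ! i) x) ^ m)"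
      using polar_identity[of m "\<lambda>i. X (u ! i) x"] by simp
    then have "(\<Prod>i<m. X (u ! i) x) = (\<Sum>T\<in>Pow {..<m}. (-1) ^ (m - card T) * (\<Sum>i\<in>T. X (u ! i) x) ^ m) / fact m"
      by (subst eq_divide_eq) (simp add: mult.commute)
    then show "(\<Prod>i<m. X (u ! i) x) = (1 / fact m) * (\<Sum>T\<in>Pow {..<m}. (-1) ^ (m - card T) * (\<Sum>i\<in>T. X (u ! i) x) ^ m)"
      by simp
  qed
  have int: "integrable M (\<lambda>x. (1 / fact m) * (\<Sum>T\<in>Pow {..<m}. (-1) ^ (m - card T) * (\<Sum>i\<in>T. X (u ! i) x) ^ m))"
    by (intro integrable_mult_right integrable_sum) (use intY in auto)
  have "integral\<^sup>L M (\<lambda>x. (1 / fact m) * (\<Sum>T\<in>Pow {..<m}. (-1) ^ (m - card T) * (\<Sum>i\<in>T. X (u ! i) x) ^ m))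
      = (1 / fact m) * (\<Sum>T\<in>Pow {..<m}. (-1) ^ (m - card T) * integral\<^sup>L M (\<lambda>x. (\<Sum>i\<in>T. X (u ! i) x) ^ m))"
  proof -
    have "integral\<^sup>L M (\<lambda>x. (1 / fact m) * (\<Sum>T\<in>Pow {..<m}. (-1) ^ (m - card T) * (\<Sum>i\<in>T. X (u ! i) x) ^ m))
      = (1 / fact m) * integral\<^sup>L M (\<lambda>x. \<Sum>T\<in>Pow {..<m}. (-1) ^ (m - card T) * (\<Sum>i\<in>T. X (u ! i) x) ^ m)"
      by (rule integral_mult_right_zero)
    also have "integral\<^sup>L M (\<lambda>x. \<Sum>T\<in>Pow {..<m}. (-1) ^ (m - card T) * (\<Sum>i\<in>T. X (u ! i) x) ^ m)
      = (\<Sum>T\<in>Pow {..<m}. integral\<^sup>L M (\<lambda>x. (-1) ^ (m - card T) * (\<Sum>i\<in>T. X (u ! i) x) ^ m))"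
      by (subst Bochner_Integration.integral_sum) (use intY in \<open>auto intro!: integrable_mult_right\<close>)
    also have "\<dots> = (\<Sum>T\<in>Pow {..<m}. (-1) ^ (m - card T) * integral\<^sup>L M (\<lambda>x. (\<Sum>i\<in>T. X (u ! i) x) ^ m))"
      by (intro sum.cong refl integral_mult_right_zero)
    finally show ?thesis .
  qed
  then show ?thesis using int unfolding pw m_def[symmetric] by simp
qed

lemma pair_integrable: "a < k \<Longrightarrow> b < k \<Longrightarrow> integrable M (\<lambda>x. X a x * X b x)"
  using prod_integrable_value[of "[a, b]"] by (simp add: lessThan_Suc mult.commute)

lemma Y2:
  assumes "finite T" "\<forall>i\<in>T. u i < k"
  shows "complex_of_real (integral\<^sup>L M (\<lambda>x. (\<Sum>i\<in>T. X (u i) x) ^ 2)) = \<rho> ((\<Sum>i\<in>T. A (u i)) * (\<Sum>i\<in>T. A (u i)))"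
proof -
  have "(\<lambda>x. (\<Sum>i\<in>T. X (u i) x) ^ 2) = (\<lambda>x. \<Sum>i\<in>T. \<Sum>j\<in>T. X (u i) x * X (u j) x)"
    by (simp only: power2_eq_square sum_product)
  then have "integral\<^sup>L M (\<lambda>x. (\<Sum>i\<in>T. X (u i) x) ^ 2) = (\<Sum>i\<in>T. \<Sum>j\<in>T. integral\<^sup>L M (\<lambda>x. X (u i) x * X (u j) x))"
    using assms pair_integrable by (simp add: Bochner_Integration.integral_sum integrable_sum)
  then have "complex_of_real (integral\<^sup>L M (\<lambda>x. (\<Sum>i\<in>T. X (u i) x) ^ 2)) = (\<Sum>i\<in>T. \<Sum>j\<in>T. \<rho> (A (u i) * A (u j)))"
    using assms cov by simp
  also have "\<dots> = \<rho> ((\<Sum>i\<in>T. A (u i)) * (\<Sum>i\<in>T. A (u i)))"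
    by (subst sum_distrib_right) (simp only: sum_distrib_left sum)
  finally show ?thesis .
qed

lemma gauss_Wl:
  assumes "set u \<subseteq> {..<k}"
  shows "complex_of_real (integral\<^sup>L M (\<lambda>x. \<Prod>i<length u. X (u ! i) x)) = Wl \<rho> (map A u)"
proof -
  define m where "m = length u"
  define h where "h = m div 2"
  have uk: "\<forall>i\<in>T. u ! i < k" if "T \<in> Pow {..<m}" for T
    using that assms nth_mem unfolding m_def by blast
  have fin: "finite T" if "T \<in> Pow {..<m}" for T
    using that by (auto intro: finite_subset)
  have cenB: "\<rho> (\<Sum>i\<in>T. A (u ! i)) = 0" if "T \<in> Pow {..<m}" for T
    using uk[OF that] by (simp add: sum cenA)
  have "of_nat (fact m) * complex_of_real (integral\<^sup>L M (\<lambda>x. \<Prod>i<m. X (u ! i) x))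
      = complex_of_real (fact m * integral\<^sup>L M (\<lambda>x. \<Prod>i<m. X (u ! i) x))" by simp
  also have "\<dots> = complex_of_real (\<Sum>T\<in>Pow {..<m}. (-1) ^ (m - card T) * integral\<^sup>L M (\<lambda>x. (\<Sum>i\<in>T. X (u ! i) x) ^ m))"
    using prod_integrable_value[OF assms] by (simp add: m_def)
  also have "\<dots> = (\<Sum>T\<in>Pow {..<m}. (-1) ^ (m - card T) * Wl \<rho> (replicate m (\<Sum>i\<in>T. A (u ! i))))"
    unfolding of_real_sum
  proof (intro sum.cong refl)
    fix T assume T: "T \<in> Pow {..<m}"
    have "complex_of_real (integral\<^sup>L M (\<lambda>x. (\<Sum>i\<in>T. X (u ! i) x) ^ m)) =
      (if even m then of_nat (fact m) / (2 ^ h * of_nat (fact h)) * \<rho> ((\<Sum>i\<in>T. A (u ! i)) * (\<Sum>i\<in>T. A (u ! i))) ^ h else 0)"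
      using Y_moment[OF fin[OF T] uk[OF T], of m] Y2[OF fin[OF T] uk[OF T]]
      by (simp add: h_def)
    also have "\<dots> = Wl \<rho> (replicate m (\<Sum>i\<in>T. A (u ! i)))"
      using Wl_diag[OF cenB[OF T], of m] by (simp add: h_def)
    finally show "complex_of_real ((-1) ^ (m - card T) * integral\<^sup>L M (\<lambda>x. (\<Sum>i\<in>T. X (u ! i) x) ^ m)) =
        (-1) ^ (m - card T) * Wl \<rho> (replicate m (\<Sum>i\<in>T. A (u ! i)))" by simp
  qed
  also have "\<dots> = of_nat (fact m) * Wl \<rho> (map A u)"
    using Wl_polar[OF assms] by (simp add: m_def)
  finally show ?thesis by (simp add: m_def)
qed

end

definition supp :: "'a tensor \<Rightarrow> 'a list set" where
  "supp x = {e. x e \<noteq> 0}"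

definition good :: "nat \<Rightarrow> 'a tensor \<Rightarrow> bool" where
  "good N x \<longleftrightarrow> finite (supp x) \<and> (\<forall>e\<in>supp x. length e = N)"

definition psi :: "('a::ring_1 \<Rightarrow> complex) \<Rightarrow> nat \<Rightarrow> (nat \<Rightarrow> 'a) \<Rightarrow> 'a tensor \<Rightarrow> complex" where
  "psi \<rho> N z x = (\<Sum>e\<in>supp x. x e * (\<Prod>t<N. \<rho> (z t * e ! t)))"

lemma sum_supp_ext:
  assumes "finite T" "supp x \<subseteq> T"
  shows "(\<Sum>e\<in>supp x. x e * H e) = (\<Sum>e\<in>T. x e * H e)"
  by (rule sum.mono_neutral_left) (use assms in \<open>auto simp: supp_def\<close>)

lemma psi_cong: "(\<And>t. t < N \<Longrightarrow> z t = z' t) \<Longrightarrow> psi \<rho> N z x = psi \<rho> N z' x"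
  unfolding psi_def by (intro sum.cong refl arg_cong2[where f="(*)"] prod.cong) auto

lemma supp_tmul:
  assumes "good N x" "good N y"
  shows "supp (tmul x y) \<subseteq> (\<lambda>(a, b). map2 (*) a b) ` (supp x \<times> supp y)"
proof
  fix e assume "e \<in> supp (tmul x y)"
  then have "tmul x y e \<noteq> 0" by (simp add: supp_def)
  then have "{(e1, e2). x e1 \<noteq> 0 \<and> y e2 \<noteq> 0 \<and> map2 (*) e1 e2 = e} \<noteq> {}"
    unfolding tmul_def by (metis sum.empty)
  then show "e \<in> (\<lambda>(a, b). map2 (*) a b) ` (supp x \<times> supp y)"
    by (auto simp: supp_def image_def)
qed

lemma good_tmul:
  assumes "good N x" "good N y"
  shows "good N (tmul x y)"
proof -
  have f: "finite ((\<lambda>(a, b). map2 (*) a b) ` (supp x \<times> supp y))"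
    using assms by (simp add: good_def)
  have "length e = N" if "e \<in> supp (tmul x y)" for e
    using supp_tmul[OF assms] that assms by (auto simp: good_def)
  then show ?thesis using f supp_tmul[OF assms] by (auto simp: good_def intro: finite_subset)
qed

lemma tmul_regroup:
  assumes "good N x" "good N y"
  shows "(\<Sum>e\<in>supp (tmul x y). tmul x y e * H e) = (\<Sum>e1\<in>supp x. \<Sum>e2\<in>supp y. x e1 * y e2 * H (map2 (*) e1 e2))"
proof -
  define P where "P = supp x \<times> supp y"
  define f where "f = (\<lambda>(a::'a list, b::'a list). map2 (*) a b)"
  have fP: "finite P" using assms by (simp add: P_def good_def)
  have tm: "tmul x y e = (\<Sum>p\<in>{p\<in>P. f p = e}. x (fst p) * y (snd p))" for e
  proof -
    have "{(e1, e2). x e1 \<noteq> 0 \<and> y e2 \<noteq> 0 \<and> map2 (*) e1 e2 = e} = {p\<in>P. f p = e}"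
      by (auto simp: P_def f_def supp_def)
    then show ?thesis unfolding tmul_def by (simp add: split_def)
  qed
  have "(\<Sum>e\<in>supp (tmul x y). tmul x y e * H e) = (\<Sum>e\<in>f ` P. tmul x y e * H e)"
    by (rule sum_supp_ext) (use fP supp_tmul[OF assms] in \<open>auto simp: P_def f_def\<close>)
  also have "\<dots> = (\<Sum>e\<in>f ` P. \<Sum>p\<in>{p\<in>P. f p = e}. x (fst p) * y (snd p) * H (f p))"
    unfolding tm sum_distrib_right by (intro sum.cong refl) auto
  also have "\<dots> = (\<Sum>p\<in>P. x (fst p) * y (snd p) * H (f p))"
    by (rule sum.group) (use fP in auto)
  also have "\<dots> = (\<Sum>e1\<in>supp x. \<Sum>e2\<in>supp y. x e1 * y e2 * H (map2 (*) e1 e2))"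
    unfolding P_def f_def by (simp add: sum.cartesian_product split_def)
  finally show ?thesis .
qed

lemma psi_tmul:
  assumes "good N x" "good N y"
  shows "psi \<rho> N z (tmul x y) = (\<Sum>e1\<in>supp x. x e1 * psi \<rho> N (\<lambda>t. z t * e1 ! t) y)"
proof -
  have "psi \<rho> N z (tmul x y) = (\<Sum>e1\<in>supp x. \<Sum>e2\<in>supp y. x e1 * y e2 * (\<Prod>t<N. \<rho> (z t * map2 (*) e1 e2 ! t)))"
    unfolding psi_def by (rule tmul_regroup[OF assms])
  also have "\<dots> = (\<Sum>e1\<in>supp x. x e1 * psi \<rho> N (\<lambda>t. z t * e1 ! t) y)"
  proof (intro sum.cong refl)
    fix e1 assume e1: "e1 \<in> supp x"
    have "(\<Sum>e2\<in>supp y. x e1 * y e2 * (\<Prod>t<N. \<rho> (z t * map2 (*) e1 e2 ! t))) =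
        (\<Sum>e2\<in>supp y. x e1 * (y e2 * (\<Prod>t<N. \<rho> ((z t * e1 ! t) * e2 ! t))))"
    proof (intro sum.cong refl)
      fix e2 assume e2: "e2 \<in> supp y"
      have "length e1 = N" "length e2 = N" using assms e1 e2 by (auto simp: good_def)
      then have "(\<Prod>t<N. \<rho> (z t * map2 (*) e1 e2 ! t)) = (\<Prod>t<N. \<rho> ((z t * e1 ! t) * e2 ! t))"
        by (intro prod.cong refl) (simp add: mult.assoc)
      then show "x e1 * y e2 * (\<Prod>t<N. \<rho> (z t * map2 (*) e1 e2 ! t)) = x e1 * (y e2 * (\<Prod>t<N. \<rho> ((z t * e1 ! t) * e2 ! t)))"
        by simp
    qed
    then show "(\<Sum>e2\<in>supp y. x e1 * y e2 * (\<Prod>t<N. \<rho> (z t * map2 (*) e1 e2 ! t))) = x e1 * psi \<rho> N (\<lambda>t. z t * e1 ! t) y"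
      by (simp add: psi_def sum_distrib_left)
  qed
  finally show ?thesis .
qed

lemma sum_lin_supp:
  assumes "finite I" "\<And>i. i \<in> I \<Longrightarrow> finite (supp (x i))"
  shows "(\<Sum>e\<in>supp (\<lambda>e. \<Sum>i\<in>I. c i * x i e). (\<Sum>i\<in>I. c i * x i e) * H e) = (\<Sum>i\<in>I. c i * (\<Sum>e\<in>supp (x i). x i e * H e))"
proof -
  define T where "T = (\<Union>i\<in>I. supp (x i))"
  have fT: "finite T" using assms by (simp add: T_def)
  have sub: "supp (\<lambda>e. \<Sum>i\<in>I. c i * x i e) \<subseteq> T"
    by (auto simp: supp_def T_def intro: ccontr)
  have "(\<Sum>e\<in>supp (\<lambda>e. \<Sum>i\<in>I. c i * x i e). (\<Sum>i\<in>I. c i * x i e) * H e) = (\<Sum>e\<in>T. (\<Sum>i\<in>I. c i * x i e) * H e)"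
    using sum_supp_ext[OF fT sub, of H] by simp
  also have "\<dots> = (\<Sum>i\<in>I. c i * (\<Sum>e\<in>T. x i e * H e))"
    by (simp add: sum_distrib_right sum_distrib_left mult.assoc sum.swap[of _ T])
  also have "\<dots> = (\<Sum>i\<in>I. c i * (\<Sum>e\<in>supp (x i). x i e * H e))"
  proof (rule sum.cong[OF refl])
    fix i assume "i \<in> I"
    then have "(\<Sum>e\<in>T. x i e * H e) = (\<Sum>e\<in>supp (x i). x i e * H e)"
      by (intro sum_supp_ext[symmetric] fT) (auto simp: T_def)
    then show "c i * (\<Sum>e\<in>T. x i e * H e) = c i * (\<Sum>e\<in>supp (x i). x i e * H e)" by simp
  qed
  finally show ?thesis .
qed

lemma good_lin:
  assumes "finite I" "\<And>i. i \<in> I \<Longrightarrow> good N (x i)"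
  shows "good N (\<lambda>e. \<Sum>i\<in>I. c i * x i e)"
proof -
  define T where "T = (\<Union>i\<in>I. supp (x i))"
  have fT: "finite T" using assms by (simp add: T_def good_def)
  have sub: "supp (\<lambda>e. \<Sum>i\<in>I. c i * x i e) \<subseteq> T"
    by (auto simp: supp_def T_def intro: ccontr)
  have "\<forall>e\<in>T. length e = N" using assms by (auto simp: T_def good_def)
  then show ?thesis using sub fT by (auto simp: good_def intro: finite_subset)
qed

lemma supp_tbasis: "supp (tbasis e0) = {e0}"
  by (auto simp: supp_def tbasis_def)

lemma good_tbasis: "length e0 = N \<Longrightarrow> good N (tbasis e0)"
  by (simp add: good_def supp_tbasis)

lemma tbasis_same[simp]: "tbasis e0 e0 = 1"
  by (simp add: tbasis_def)

lemma sum_tbasis: "(\<Sum>e\<in>supp (tbasis e0). tbasis e0 e * H e) = H e0"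
  by (simp only: supp_tbasis) simp

lemma ttilde_lin: "ttilde N b = (\<lambda>e. \<Sum>t<N. cN N * tbasis ((replicate N 1)[t := b]) e)"
  by (simp add: ttilde_def tscale_def tembed_def cN_def sum_distrib_left)

lemma good_ttilde: "good N (ttilde N b)"
  unfolding ttilde_lin by (intro good_lin good_tbasis) auto

lemma good_tunit: "good N (tunit N)"
  unfolding tunit_def by (intro good_tbasis) simp

lemma psi_tmul_ttilde:
  assumes "good N y"
  shows "psi \<rho> N z (tmul (ttilde N b) y) = cN N * (\<Sum>t<N. psi \<rho> N (z(t := z t * b)) y)"
proof -
  have "psi \<rho> N z (tmul (ttilde N b) y) = (\<Sum>e1\<in>supp (ttilde N b). ttilde N b e1 * psi \<rho> N (\<lambda>t. z t * e1 ! t) y)"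
    by (rule psi_tmul[OF good_ttilde assms])
  also have "\<dots> = (\<Sum>t<N. cN N * psi \<rho> N (\<lambda>t'. z t' * (replicate N 1)[t := b] ! t') y)"
    unfolding ttilde_lin by (subst sum_lin_supp) (auto simp: supp_tbasis good_tbasis[unfolded good_def])
  also have "\<dots> = (\<Sum>t<N. cN N * psi \<rho> N (z(t := z t * b)) y)"
  proof (intro sum.cong refl arg_cong2[where f="(*)"] psi_cong)
    fix t t' assume "t \<in> {..<N}" "t' < N"
    then show "z t' * (replicate N 1)[t := b] ! t' = (z(t := z t * b)) t'"
      by (auto simp: nth_list_update)
  qed
  finally show ?thesis by (simp add: sum_distrib_left)
qed

lemma good_foldr: "(\<forall>x\<in>set xs. good N x) \<Longrightarrow> good N y \<Longrightarrow> good N (foldr tmul xs y)"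
  by (induction xs) (auto intro: good_tmul)

lemma psi_foldr_ttilde:
  assumes "good N y"
  shows "psi \<rho> N z (foldr tmul (map (ttilde N) bs) y) = cN N ^ length bs * Vf N bs z (\<lambda>z'. psi \<rho> N z' y)"
proof (induction bs arbitrary: z)
  case Nil then show ?case by simp
next
  case (Cons b bs)
  have g: "good N (foldr tmul (map (ttilde N) bs) y)"
    by (rule good_foldr) (auto simp: good_ttilde assms)
  have "psi \<rho> N z (foldr tmul (map (ttilde N) (b # bs)) y) = psi \<rho> N z (tmul (ttilde N b) (foldr tmul (map (ttilde N) bs) y))"
    by simp
  also have "\<dots> = cN N * (\<Sum>t<N. psi \<rho> N (z(t := z t * b)) (foldr tmul (map (ttilde N) bs) y))"
    by (rule psi_tmul_ttilde[OF g])
  also have "\<dots> = cN N * (\<Sum>t<N. cN N ^ length bs * Vf N bs (z(t := z t * b)) (\<lambda>z'. psi \<rho> N z' y))"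
    by (simp only: Cons.IH)
  also have "\<dots> = cN N ^ length (b # bs) * Vf N (b # bs) z (\<lambda>z'. psi \<rho> N z' y)"
    by (simp only: Vf.simps length_Cons power_Suc sum_distrib_left mult.assoc)
  finally show ?case .
qed

lemma psi_tunit: "psi \<rho> N z (tmul (tunit N) y) = psi \<rho> N z y" if "good N y"
proof -
  have "psi \<rho> N z (tmul (tunit N) y) = psi \<rho> N (\<lambda>t. z t * replicate N 1 ! t) y"
    using psi_tmul[OF good_tunit that, of \<rho> z] by (simp only: tunit_def sum_tbasis)
  also have "\<dots> = psi \<rho> N z y" by (rule psi_cong) simp
  finally show ?thesis .
qed

lemma psi_assoc:
  assumes "(\<forall>x\<in>set xs. good N x)" "good N y"
  shows "psi \<rho> N z (tmul (foldr tmul xs (tunit N)) y) = psi \<rho> N z (foldr tmul xs y)"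
  using assms(1)
proof (induction xs arbitrary: z)
  case Nil then show ?case using psi_tunit[OF assms(2)] by simp
next
  case (Cons x xs)
  define F where "F = foldr tmul xs (tunit N)"
  have gx: "good N x" using Cons.prems by simp
  have gF: "good N F" unfolding F_def by (rule good_foldr) (use Cons.prems good_tunit in auto)
  have gFy: "good N (foldr tmul xs y)" by (rule good_foldr) (use Cons.prems assms(2) in auto)
  have "psi \<rho> N z (tmul (tmul x F) y) = (\<Sum>e\<in>supp (tmul x F). tmul x F e * psi \<rho> N (\<lambda>t. z t * e ! t) y)"
    by (rule psi_tmul[OF good_tmul[OF gx gF] assms(2)])
  also have "\<dots> = (\<Sum>e1\<in>supp x. \<Sum>e2\<in>supp F. x e1 * F e2 * psi \<rho> N (\<lambda>t. z t * map2 (*) e1 e2 ! t) y)"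
    by (rule tmul_regroup[OF gx gF])
  also have "\<dots> = (\<Sum>e1\<in>supp x. x e1 * (\<Sum>e2\<in>supp F. F e2 * psi \<rho> N (\<lambda>t. (z t * e1 ! t) * e2 ! t) y))"
  proof (intro sum.cong refl)
    fix e1 assume e1: "e1 \<in> supp x"
    have "(\<Sum>e2\<in>supp F. x e1 * F e2 * psi \<rho> N (\<lambda>t. z t * map2 (*) e1 e2 ! t) y)
        = (\<Sum>e2\<in>supp F. x e1 * (F e2 * psi \<rho> N (\<lambda>t. (z t * e1 ! t) * e2 ! t) y))"
    proof (intro sum.cong refl)
      fix e2 assume e2: "e2 \<in> supp F"
      have "length e1 = N" "length e2 = N" using gx gF e1 e2 by (auto simp: good_def)
      then have "psi \<rho> N (\<lambda>t. z t * map2 (*) e1 e2 ! t) y = psi \<rho> N (\<lambda>t. (z t * e1 ! t) * e2 ! t) y"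
        by (intro psi_cong) (simp add: mult.assoc)
      then show "x e1 * F e2 * psi \<rho> N (\<lambda>t. z t * map2 (*) e1 e2 ! t) y = x e1 * (F e2 * psi \<rho> N (\<lambda>t. (z t * e1 ! t) * e2 ! t) y)"
        by simp
    qed
    then show "(\<Sum>e2\<in>supp F. x e1 * F e2 * psi \<rho> N (\<lambda>t. z t * map2 (*) e1 e2 ! t) y) =
        x e1 * (\<Sum>e2\<in>supp F. F e2 * psi \<rho> N (\<lambda>t. (z t * e1 ! t) * e2 ! t) y)"
      by (simp add: sum_distrib_left)
  qed
  also have "\<dots> = (\<Sum>e1\<in>supp x. x e1 * psi \<rho> N (\<lambda>t. z t * e1 ! t) (tmul F y))"
    using psi_tmul[OF gF assms(2)] by simp
  also have "\<dots> = (\<Sum>e1\<in>supp x. x e1 * psi \<rho> N (\<lambda>t. z t * e1 ! t) (foldr tmul xs y))"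
    using Cons.IH Cons.prems by (simp add: F_def)
  also have "\<dots> = psi \<rho> N z (tmul x (foldr tmul xs y))"
    by (rule psi_tmul[OF gx gFy, symmetric])
  finally show ?case by (simp add: F_def)
qed

lemma psi_tmul_lin:
  assumes "finite I" "\<And>i. i \<in> I \<Longrightarrow> good N (x i)" "good N y"
  shows "psi \<rho> N z (tmul (\<lambda>e. \<Sum>i\<in>I. c i * x i e) y) = (\<Sum>i\<in>I. c i * psi \<rho> N z (tmul (x i) y))"
proof -
  have "psi \<rho> N z (tmul (\<lambda>e. \<Sum>i\<in>I. c i * x i e) y) =
      (\<Sum>e1\<in>supp (\<lambda>e. \<Sum>i\<in>I. c i * x i e). (\<Sum>i\<in>I. c i * x i e1) * psi \<rho> N (\<lambda>t. z t * e1 ! t) y)"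
    by (rule psi_tmul[OF good_lin[OF assms(1,2)] assms(3)])
  also have "\<dots> = (\<Sum>i\<in>I. c i * (\<Sum>e1\<in>supp (x i). x i e1 * psi \<rho> N (\<lambda>t. z t * e1 ! t) y))"
    by (rule sum_lin_supp) (use assms in \<open>auto simp: good_def\<close>)
  also have "\<dots> = (\<Sum>i\<in>I. c i * psi \<rho> N z (tmul (x i) y))"
  proof (intro sum.cong refl arg_cong2[where f="(*)"])
    fix i assume "i \<in> I"
    then show "(\<Sum>e1\<in>supp (x i). x i e1 * psi \<rho> N (\<lambda>t. z t * e1 ! t) y) = psi \<rho> N z (tmul (x i) y)"
      using psi_tmul[OF assms(2) assms(3)] by simp
  qed
  finally show ?thesis .
qed

lemma tstate_psi: "good N x \<Longrightarrow> tstate \<rho> x = psi \<rho> N (\<lambda>_. 1) x"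
  unfolding tstate_def psi_def good_def supp_def
  by (intro sum.cong refl arg_cong2[where f="(*)"]) (auto simp: prod_list_nth)


context fullsetup
begin

lemma good_teval:
  "good N (teval N p (\<lambda>a. ttilde N (A a)))"
  unfolding teval_def tprod_list_def
  by (intro good_lin good_foldr) (auto simp: good_ttilde good_tunit)

lemma psi_tpow:
  fixes p :: ncpoly
  assumes vars: "\<forall>w \<in> Poly_Mapping.keys p. set w \<subseteq> {..<k}"
  shows "psi \<rho> N z (tpow N (teval N p (\<lambda>a. ttilde N (A a))) n) =
    (\<Sum>ws\<in>Lm (Poly_Mapping.keys p) n. prod_list (map (Poly_Mapping.lookup p) ws) *
        (cN N ^ length (concat ws) * Vf N (map A (concat ws)) z (\<lambda>z'. \<Prod>t<N. \<rho> (z' t))))"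
proof (induction n arbitrary: z)
  case 0
  have "psi \<rho> N z (tunit N) = (\<Prod>t<N. \<rho> (z t * replicate N 1 ! t))"
    unfolding tunit_def psi_def by (simp only: sum_tbasis)
  also have "\<dots> = (\<Prod>t<N. \<rho> (z t))" by (rule prod.cong) auto
  finally show ?case by (simp add: tpow_def Lm_0)
next
  case (Suc n)
  define x where "x = teval N p (\<lambda>a. ttilde N (A a))"
  define K where "K = (\<lambda>z'. \<Prod>t<N. \<rho> (z' t))"
  define C where "C ws = prod_list (map (Poly_Mapping.lookup p) ws)" for ws
  define Y where "Y = tpow N x n"
  have gY: "good N Y" unfolding Y_def tpow_def
    by (induction n) (auto intro: good_tmul good_tunit good_teval simp: x_def)
  have gw: "good N (tprod_list N (map (\<lambda>a. ttilde N (A a)) w))" for w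
    unfolding tprod_list_def by (intro good_foldr) (auto simp: good_ttilde good_tunit)
  have "tpow N x (Suc n) = tmul x Y" by (simp add: tpow_def Y_def)
  then have "psi \<rho> N z (tpow N x (Suc n)) = psi \<rho> N z (tmul x Y)" by simp
  also have "\<dots> = (\<Sum>w\<in>Poly_Mapping.keys p. Poly_Mapping.lookup p w * psi \<rho> N z (tmul (tprod_list N (map (\<lambda>a. ttilde N (A a)) w)) Y))"
    unfolding x_def teval_def by (rule psi_tmul_lin) (auto simp: gw gY)
  also have "\<dots> = (\<Sum>w\<in>Poly_Mapping.keys p. Poly_Mapping.lookup p w * (cN N ^ length w * Vf N (map A w) z (\<lambda>z'. psi \<rho> N z' Y)))"
  proof (rule sum.cong[OF refl])
    fix w
    have "psi \<rho> N z (tmul (tprod_list N (map (\<lambda>a. ttilde N (A a)) w)) Y) = psi \<rho> N z (foldr tmul (map (ttilde N) (map A w)) Y)"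
      unfolding tprod_list_def by (subst psi_assoc) (auto simp: good_ttilde gY comp_def)
    also have "\<dots> = cN N ^ length w * Vf N (map A w) z (\<lambda>z'. psi \<rho> N z' Y)"
      using psi_foldr_ttilde[OF gY, of \<rho> z "map A w"] by (simp add: comp_def)
    finally show "Poly_Mapping.lookup p w * psi \<rho> N z (tmul (tprod_list N (map (\<lambda>a. ttilde N (A a)) w)) Y) =
        Poly_Mapping.lookup p w * (cN N ^ length w * Vf N (map A w) z (\<lambda>z'. psi \<rho> N z' Y))" by simp
  qed
  also have "\<dots> = (\<Sum>w\<in>Poly_Mapping.keys p. Poly_Mapping.lookup p w * (cN N ^ length w *
      Vf N (map A w) z (\<lambda>z'. \<Sum>ws\<in>Lm (Poly_Mapping.keys p) n. (C ws * cN N ^ length (concat ws)) * Vf N (map A (concat ws)) z' K)))"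
    unfolding Y_def x_def Suc.IH by (simp add: C_def K_def mult.assoc)
  also have "\<dots> = (\<Sum>w\<in>Poly_Mapping.keys p. \<Sum>ws\<in>Lm (Poly_Mapping.keys p) n.
      C (w # ws) * (cN N ^ length (concat (w # ws)) * Vf N (map A (concat (w # ws))) z K))"
  proof (rule sum.cong[OF refl])
    fix w
    have "Vf N (map A w) z (\<lambda>z'. \<Sum>ws\<in>Lm (Poly_Mapping.keys p) n. (C ws * cN N ^ length (concat ws)) * Vf N (map A (concat ws)) z' K)
      = (\<Sum>ws\<in>Lm (Poly_Mapping.keys p) n. (C ws * cN N ^ length (concat ws)) * Vf N (map A w) z (\<lambda>z'. Vf N (map A (concat ws)) z' K))"
      by (rule Vf_lin) (simp add: Lm_finite)
    also have "\<dots> = (\<Sum>ws\<in>Lm (Poly_Mapping.keys p) n. (C ws * cN N ^ length (concat ws)) * Vf N (map A (concat (w # ws))) z K)"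
      by (simp add: Vf_append)
    finally show "Poly_Mapping.lookup p w * (cN N ^ length w *
      Vf N (map A w) z (\<lambda>z'. \<Sum>ws\<in>Lm (Poly_Mapping.keys p) n. (C ws * cN N ^ length (concat ws)) * Vf N (map A (concat ws)) z' K))
      = (\<Sum>ws\<in>Lm (Poly_Mapping.keys p) n. C (w # ws) * (cN N ^ length (concat (w # ws)) * Vf N (map A (concat (w # ws))) z K))"
      by (simp add: sum_distrib_left C_def power_add algebra_simps)
  qed
  also have "\<dots> = (\<Sum>ws\<in>Lm (Poly_Mapping.keys p) (Suc n). C ws * (cN N ^ length (concat ws) * Vf N (map A (concat ws)) z K))"
    by (rule sum_Lm_Suc[symmetric]) simp
  finally show ?case by (simp add: x_def C_def K_def)
qed

lemma ceval_expand:
  fixes p :: ncpoly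
  shows "ceval (comm_image p) Y = (\<Sum>w\<in>Poly_Mapping.keys p. Poly_Mapping.lookup p w * prod_list (map Y w))"
proof -
  define q where "q = comm_image p"
  have fK: "finite (Poly_Mapping.keys p)" by simp
  have sub: "{m. q m \<noteq> 0} \<subseteq> mset ` Poly_Mapping.keys p"
  proof
    fix m assume "m \<in> {m. q m \<noteq> 0}"
    then have "q m \<noteq> 0" by simp
    then have "{w \<in> Poly_Mapping.keys p. mset w = m} \<noteq> {}"
      unfolding q_def comm_image_def by (metis sum.empty)
    then show "m \<in> mset ` Poly_Mapping.keys p" by auto
  qed
  have "ceval q Y = (\<Sum>m\<in>mset ` Poly_Mapping.keys p. q m * (\<Prod>a\<in>#m. Y a))"
    unfolding ceval_def by (rule sum.mono_neutral_left) (use sub fK in auto)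
  also have "\<dots> = (\<Sum>m\<in>mset ` Poly_Mapping.keys p. \<Sum>w\<in>{w \<in> Poly_Mapping.keys p. mset w = m}. Poly_Mapping.lookup p w * (\<Prod>a\<in>#mset w. Y a))"
    unfolding q_def comm_image_def sum_distrib_right by (intro sum.cong refl) auto
  also have "\<dots> = (\<Sum>w\<in>Poly_Mapping.keys p. Poly_Mapping.lookup p w * (\<Prod>a\<in>#mset w. Y a))"
    by (rule sum.group) auto
  also have "\<dots> = (\<Sum>w\<in>Poly_Mapping.keys p. Poly_Mapping.lookup p w * prod_list (map Y w))"
    by (intro sum.cong refl) (simp add: prod_mset_prod_list[symmetric])
  finally show ?thesis by (simp add: q_def)
qed

lemma prod_list_concat_map: "prod_list (map (\<lambda>w. prod_list (map f w)) ws) = prod_list (map f (concat ws))"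
  by (induction ws) auto

lemma prod_list_map_mult: "prod_list (map (\<lambda>w. f w * g w) ws) = prod_list (map f ws) * (prod_list (map g ws) :: complex)"
  by (induction ws) auto

lemma of_real_prod_list: "prod_list (map (\<lambda>a. complex_of_real (f a)) u) = complex_of_real (prod_list (map f u))"
  by (induction u) auto

lemma main:
  fixes p :: ncpoly
  assumes vars: "\<forall>w \<in> Poly_Mapping.keys p. set w \<subseteq> {..<k}"
  shows "(\<lambda>N. tstate \<rho> (tpow N (teval N p (\<lambda>a. ttilde N (A a))) n))
           \<longlonglongrightarrow> integral\<^sup>L M (\<lambda>x. (ceval (comm_image p) (\<lambda>a. complex_of_real (X a x))) ^ n)"
proof -
  define W where "W = Lm (Poly_Mapping.keys p) n"
  define C where "C ws = prod_list (map (Poly_Mapping.lookup p) ws)" for ws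
  have fW: "finite W" by (simp add: W_def Lm_finite)
  have wk: "set (concat ws) \<subseteq> {..<k}" if "ws \<in> W" for ws
    using that vars by (auto simp: W_def Lm_def)
  have gp: "good N (tpow N (teval N p (\<lambda>a. ttilde N (A a))) n)" for N
    unfolding tpow_def by (induction n) (auto intro: good_tmul good_tunit good_teval)
  have lhs: "tstate \<rho> (tpow N (teval N p (\<lambda>a. ttilde N (A a))) n) =
      (\<Sum>ws\<in>W. C ws * (cN N ^ length (map A (concat ws)) * V \<rho> N (map A (concat ws)) (\<lambda>_. 1)))" for N
    unfolding V_def length_map W_def C_def by (simp only: tstate_psi[OF gp] psi_tpow[OF vars])
  have lim: "(\<lambda>N. \<Sum>ws\<in>W. C ws * (cN N ^ length (map A (concat ws)) * V \<rho> N (map A (concat ws)) (\<lambda>_. 1)))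
      \<longlonglongrightarrow> (\<Sum>ws\<in>W. C ws * Wl \<rho> (map A (concat ws)))"
  proof (intro tendsto_sum tendsto_mult tendsto_const QL)
    fix ws assume "ws \<in> W"
    then show "\<forall>b\<in>set (map A (concat ws)). \<rho> b = 0" using wk cenA by auto
  qed
  have rhs_pw: "(ceval (comm_image p) (\<lambda>a. complex_of_real (X a x))) ^ n =
      (\<Sum>ws\<in>W. C ws * complex_of_real (prod_list (map (\<lambda>a. X a x) (concat ws))))" for x
  proof -
    have "(ceval (comm_image p) (\<lambda>a. complex_of_real (X a x))) ^ n =
        (\<Sum>w\<in>Poly_Mapping.keys p. Poly_Mapping.lookup p w * prod_list (map (\<lambda>a. complex_of_real (X a x)) w)) ^ n"
      by (simp add: ceval_expand)
    also have "\<dots> = (\<Sum>ws\<in>W. prod_list (map (\<lambda>w. Poly_Mapping.lookup p w * prod_list (map (\<lambda>a. complex_of_real (X a x)) w)) ws))"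
      unfolding W_def by (rule power_sum_Lm) simp
    also have "\<dots> = (\<Sum>ws\<in>W. C ws * complex_of_real (prod_list (map (\<lambda>a. X a x) (concat ws))))"
      by (intro sum.cong refl) (simp only: prod_list_map_mult prod_list_concat_map C_def of_real_prod_list)
    finally show ?thesis .
  qed
  have "integral\<^sup>L M (\<lambda>x. (ceval (comm_image p) (\<lambda>a. complex_of_real (X a x))) ^ n)
      = integral\<^sup>L M (\<lambda>x. \<Sum>ws\<in>W. C ws * complex_of_real (prod_list (map (\<lambda>a. X a x) (concat ws))))"
    by (simp only: rhs_pw)
  also have "\<dots> = (\<Sum>ws\<in>W. C ws * complex_of_real (integral\<^sup>L M (\<lambda>x. prod_list (map (\<lambda>a. X a x) (concat ws)))))"
  proof (subst Bochner_Integration.integral_sum)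
    fix ws assume "ws \<in> W"
    then have "integrable M (\<lambda>x. prod_list (map (\<lambda>a. X a x) (concat ws)))"
      using prod_integrable_value[OF wk] by (simp add: prod_list_nth)
    then show "integrable M (\<lambda>x. C ws * complex_of_real (prod_list (map (\<lambda>a. X a x) (concat ws))))"
      by (intro integrable_mult_right integrable_of_real)
  qed simp
  also have "\<dots> = (\<Sum>ws\<in>W. C ws * Wl \<rho> (map A (concat ws)))"
  proof (rule sum.cong[OF refl])
    fix ws assume ws: "ws \<in> W"
    have "complex_of_real (integral\<^sup>L M (\<lambda>x. prod_list (map (\<lambda>a. X a x) (concat ws)))) = Wl \<rho> (map A (concat ws))"
      using gauss_Wl[OF wk[OF ws]] by (simp add: prod_list_nth)
    then show "C ws * complex_of_real (integral\<^sup>L M (\<lambda>x. prod_list (map (\<lambda>a. X a x) (concat ws)))) = C ws * Wl \<rho> (map A (concat ws))"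
      by simp
  qed
  finally have R: "integral\<^sup>L M (\<lambda>x. (ceval (comm_image p) (\<lambda>a. complex_of_real (X a x))) ^ n) = (\<Sum>ws\<in>W. C ws * Wl \<rho> (map A (concat ws)))" .
  show ?thesis unfolding R lhs by (rule lim)
qed

end

theorem theorem2:
  fixes sm :: "complex \<Rightarrow> 'a::ring_1 \<Rightarrow> 'a"
    and st :: "'a \<Rightarrow> 'a"
    and \<rho> :: "'a \<Rightarrow> complex"
    and k :: nat
    and A :: "nat \<Rightarrow> 'a"
    and p :: ncpoly
    and M :: "'b measure"
    and X :: "nat \<Rightarrow> 'b \<Rightarrow> real"
    and n :: nat
  assumes alg: "star_algebra sm st"
    and state: "is_state sm st \<rho>"
    and selfadj: "\<forall>a<k. st (A a) = A a"
    and centered: "\<forall>a<k. \<rho> (A a) = 0"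
    and comm2: "\<forall>a<k. \<forall>b<k. \<rho> (A a * A b) = \<rho> (A b * A a)"
    and vars: "\<forall>w \<in> Poly_Mapping.keys p. set w \<subseteq> {..<k}"
    and prob: "prob_space M"
    and gauss: "jointly_centered_gaussian M k X"
    and cov: "\<forall>a<k. \<forall>b<k. complex_of_real (integral\<^sup>L M (\<lambda>x. X a x * X b x)) = \<rho> (A a * A b)"
  shows "(\<lambda>N. tstate \<rho> (tpow N (teval N p (\<lambda>a. ttilde N (A a))) n))
           \<longlonglongrightarrow> integral\<^sup>L M (\<lambda>x. (ceval (comm_image p) (\<lambda>a. complex_of_real (X a x))) ^ n)"
proof -
  have a1: "addst \<rho>" by (rule addst.intro) (use state in \<open>simp_all add: is_state_def\<close>)
  have a2: "qsetup \<rho> A k" by (intro qsetup.intro qsetup_axioms.intro a1) (use centered comm2 in auto)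
  have a3: "fullsetup \<rho> A k M X" by (intro fullsetup.intro fullsetup_axioms.intro a2) (use prob gauss cov in auto)
  interpret fullsetup \<rho> A k M X by (rule a3)
  show ?thesis by (rule main[OF vars])
qed


end
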